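(* In the matrix model described in the context, suppose the matrix noise assumption holds, and let $\mathcal E$ be the event on which all of the following hold: (i) for all $0\le k\le\log m$: $\|[\mathcal P_{\sf off\text{-}diag}(\bm E\bm E^\top)]^k\bm E\bm V^\star\|_{2,\infty}\le C_3\sqrt{\mu r}\,(C_3(\sqrt{m_1m_2}+m_1)\omega^2_{\max}\log^2m)^k\omega_{\max}\log m$ and $\|[\mathcal P_{\sf off\text{-}diag}(\bm E\bm E^\top)]^k\bm U^\star\|_{2,\infty}\le C_3\sqrt{\mu r/m_1}\,(C_3(\sqrt{m_1m_2}+m_1)\omega^2_{\max}\log^2m)^k$; (ii) $|\widetilde\sigma_i-\sigma_i^\star|\le\|\bm E\bm V^{\star(1)}\|\le\|\bm E\bm V^\star\|\le\sqrt{C_5}\sqrt{m_1}\omega_{\max}\log m$ for all $i\in[\overline r]$; (iii) $\|\mathcal P_{\sf off\text{-}diag}(\bm E\bm E^\top-\bm E\bm V^\star\bm V^{\star\top}\bm E^\top)\|\le3C_5(\sqrt{m_1m_2}+m_1)\omega^2_{\max}\log^2m$; (iv) $\|\bm U^{\star(1)}\bm U^{\star(1)\top}\widetilde{\bm U}^{(1)}-\widetilde{\bm U}^{(1)}\|_{2,\infty}\le\frac{4C_5\sqrt{\mu r}\,\omega_{\max}\log m}{\sigma_r^\star}\le\sqrt{\mu r/m_1}$; (v) $\|\widetilde{\bm U}^{(1)}\|_{2,\infty}\le2\sqrt{\mu r/m_1}$. Then there exist sufficiently large constants $C_2,C_3>0$ (independent of $C_0$) such that on $\mathcal E$, for every $0\le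 i\le\log m$, $$\|\bm Z_3^i\bm U^\star\|_{2,\infty}\le3C_3\sqrt{\mu r/m_1}\,\big(C_3(\sqrt{m_1m_2}+m_1)\omega^2_{\max}\log^2m\big)^i,$$ $$\|\bm Z_3^i\bm E\bm V^\star\|_{2,\infty}\le3C_3\sqrt{\mu r}\,\big(C_3(\sqrt{m_1m_2}+m_1)\omega^2_{\max}\log^2m\big)^i\omega_{\max}\log m,$$ $$\|\bm Z_3^i\widetilde{\bm U}^{(1)}\|_{2,\infty}\le4C_3\sqrt{\mu r/m_1}\,\big(C_3(\sqrt{m_1m_2}+m_1)\omega^2_{\max}\log^2m\big)^i,$$ $$\|\bm Z_3^i\bm Z_1\|_{2,\infty}\le C_2\sqrt{\mu r}\,(\sigma^\star_{\overline r+1}+\sqrt{m_1}\omega_{\max}\log m)\big(C_3(\sqrt{m_1m_2}+m_1)\omega^2_{\max}\log^2m\big)^i\omega_{\max}\log m,$$ $$\|\bm Z_3^i\bm Z_2\|_{2,\infty}\le C_2\sqrt{\mu r}\,\big(C_3(\sqrt{m_1m_2}+m_1)\omega^2_{\max}\log^2m\big)^i\omega_{\max}\sigma^\star_{\overline r+1}\log m.$$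
   Context: Matrix model: one observes $\bm Y=\bm X^\star+\bm E\in\mathbb R^{m_1\times m_2}$, where $\bm X^\star$ has rank at most $r$ and SVD $\bm X^\star=\bm U^\star\bm\Sigma^\star\bm V^{\star\top}=\sum_{i=1}^r\sigma_i^\star\bm u_i^\star\bm v_i^{\star\top}$ with $\sigma_1^\star\ge\dots\ge\sigma_r^\star\ge0$ and orthonormal-column $\bm U^\star,\bm V^\star$; $\sigma^\star_{r+1}=0$, $m=\max\{m_1,m_2\}$, $\mu=\max\{\frac{m_1}{r}\max_i\|\bm U^\star_{i,:}\|_2^2,\frac{m_2}{r}\max_j\|\bm V^\star_{j,:}\|_2^2\}$, $\omega^2_{\max}=\max_{i,j}\mathbb E[E_{i,j}^2]$. Matrix noise assumption: entries $E_{i,j}$ independent, mean zero, $\mathbb P(|E_{i,j}|>B)\le m^{-12}$ with $B\le C_{\mathsf b}\omega_{\max}\min\{(m_1m_2)^{1/4},\sqrt{m_2}\}/\log m$, $C_{\mathsf b}$ universal. Let $C_0>0$ be a fixed (large) constant and $\mathcal A=\{j\in[r]:\sigma_j^\star\ge\frac{4r}{4r-1}\sigma^\star_{j+1}\vee C_0r[(m_1m_2)^{1/4}+rm_1^{1/2}]\omega_{\max}\log m\}$; $\overline r=\max\mathcal A$ if $\mathcal A\ne\emptyset$ and $\overline r=0$ otherwise. Let $\bm U^{\star(1)}=[\bm u^\star_1,\dots,\bm u^\star_{\overline r}]$, $\bm\Sigma^{\star(1)}=\mathrm{diag}(\sigma^\star_1,\dots,\sigma^\star_{\overline r})$, $\bm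 V^{\star(1)}=[\bm v^\star_1,\dots,\bm v^\star_{\overline r}]$, and $\bm U^{\star(2)},\bm\Sigma^{\star(2)},\bm V^{\star(2)}$ the analogous objects for indices $\overline r+1,\dots,r$. Let $\widetilde{\bm U}^{(1)}\widetilde{\bm\Sigma}^{(1)}\widetilde{\bm W}^{(1)\top}$ be the SVD of $\bm U^{\star(1)}\bm\Sigma^{\star(1)}+\bm E\bm V^{\star(1)}$ with $\widetilde{\bm\Sigma}^{(1)}=\mathrm{diag}(\widetilde\sigma_1,\dots,\widetilde\sigma_{\overline r})$. For a matrix $\bm A$ with orthonormal columns, $\mathcal P_{\bm A}=\bm A\bm A^\top$ and $\mathcal P_{\bm A_\perp}=\bm I-\bm A\bm A^\top$. $\mathcal P_{\sf diag}$ keeps diagonal entries, $\mathcal P_{\sf off\text{-}diag}=\mathrm{Id}-\mathcal P_{\sf diag}$. Define $\bm Z_1=\bm U^{\star(2)}\bm\Sigma^{\star(2)}\bm V^{\star(2)\top}\bm E^\top+\bm E\bm V^{\star(2)}\bm\Sigma^{\star(2)}\bm U^{\star(2)\top}+\bm E\bm V^{\star(2)}\bm V^{\star(2)\top}\bm E^\top$, $\bm Z_2=\mathcal P_{\widetilde{\bm U}^{(1)}}\bm U^{\star(2)}(\bm\Sigma^{\star(2)})^2\bm U^{\star(2)\top}\mathcal P_{(\widetilde{\bm U}^{(1)})_\perp}+\bm U^{\star(2)}(\bm\Sigma^{\star(2)})^2\bm U^{\star(2)\top}\mathcal P_{\widetilde{\bm U}^{(1)}}$, $\bm Z_3=\mathcal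 P_{\sf off\text{-}diag}(\bm E\bm E^\top-\bm E\bm V^\star\bm V^{\star\top}\bm E^\top)$. $\|\cdot\|$ is the spectral norm, $\|\bm A\|_{2,\infty}=\max_i\|\bm A_{i,:}\|_2$; $C_5>0$ is a fixed large constant. *)

theory Defs
  imports "HOL-Probability.Probability" "Jordan_Normal_Form.Matrix"
begin

definition vnorm :: "real vec \<Rightarrow> real" where
  "vnorm v = sqrt (v \<bullet> v)"

definition spec_norm :: "real mat \<Rightarrow> real" where
  "spec_norm A = Sup {vnorm (A *\<^sub>v v) | v. v \<in> carrier_vec (dim_col A) \<and> vnorm v \<le> 1}"

definition norm_2inf :: "real mat \<Rightarrow> real" where
  "norm_2inf A = Max (insert 0 {vnorm (row A i) | i. i < dim_row A})"

definition offdiag :: "real mat \<Rightarrow> real mat" where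
  "offdiag A = mat (dim_row A) (dim_col A) (\<lambda>(i,j). if i = j then 0 else A $$ (i,j))"

definition proj :: "real mat \<Rightarrow> real mat" where
  "proj A = A * A\<^sup>T"

definition proj_perp :: "real mat \<Rightarrow> real mat" where
  "proj_perp A = 1\<^sub>m (dim_row A) - A * A\<^sup>T"

definition orthonormal_cols :: "real mat \<Rightarrow> bool" where
  "orthonormal_cols A \<longleftrightarrow> A\<^sup>T * A = 1\<^sub>m (dim_col A)"

definition col_block :: "real mat \<Rightarrow> nat \<Rightarrow> nat \<Rightarrow> real mat" where
  "col_block A a b = mat (dim_row A) (b - a) (\<lambda>(i,j). A $$ (i, j + a))"

text \<open>Diagonal matrix diag(s (a+1), ..., s b) with 1-based singular values s.\<close>
definition sig_block :: "(nat \<Rightarrow> real) \<Rightarrow> nat \<Rightarrow> nat \<Rightarrow> real mat" where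
  "sig_block s a b = mat (b - a) (b - a) (\<lambda>(i,j). if i = j then s (i + a + 1) else 0)"

definition is_svd :: "real mat \<Rightarrow> real mat \<Rightarrow> real mat \<Rightarrow> real mat \<Rightarrow> bool" where
  "is_svd A U S W \<longleftrightarrow>
     U \<in> carrier_mat (dim_row A) (dim_col A) \<and> S \<in> carrier_mat (dim_col A) (dim_col A) \<and>
     W \<in> carrier_mat (dim_col A) (dim_col A) \<and>
     orthonormal_cols U \<and> orthonormal_cols W \<and>
     (\<forall>i<dim_col A. \<forall>j<dim_col A. i \<noteq> j \<longrightarrow> S $$ (i,j) = 0) \<and>
     (\<forall>i<dim_col A. 0 \<le> S $$ (i,i)) \<and>
     (\<forall>i j. i \<le> j \<and> j < dim_col A \<longrightarrow> S $$ (j,j) \<le> S $$ (i,i)) \<and>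
     A = U * S * W\<^sup>T"

definition incoh :: "nat \<Rightarrow> nat \<Rightarrow> nat \<Rightarrow> real mat \<Rightarrow> real mat \<Rightarrow> real" where
  "incoh m1 m2 r U V = max (real m1 / real r * Max {(vnorm (row U i))\<^sup>2 | i. i < m1})
                           (real m2 / real r * Max {(vnorm (row V j))\<^sup>2 | j. j < m2})"

text \<open>The index set A and rbar (singular values sig are 1-based, sig (r+1) = 0).\<close>
definition Aset :: "real \<Rightarrow> nat \<Rightarrow> nat \<Rightarrow> nat \<Rightarrow> real \<Rightarrow> (nat \<Rightarrow> real) \<Rightarrow> nat set" where
  "Aset C0 r m1 m2 \<omega> sig = {j \<in> {1..r}.
      sig j \<ge> max (4 * real r / (4 * real r - 1) * sig (j + 1))
                   (C0 * real r * ((real m1 * real m2) powr (1/4) + real r * sqrt (real m1))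
                      * \<omega> * ln (real (max m1 m2)))}"

definition rbar :: "real \<Rightarrow> nat \<Rightarrow> nat \<Rightarrow> nat \<Rightarrow> real \<Rightarrow> (nat \<Rightarrow> real) \<Rightarrow> nat" where
  "rbar C0 r m1 m2 \<omega> sig = (if Aset C0 r m1 m2 \<omega> sig = {} then 0 else Max (Aset C0 r m1 m2 \<omega> sig))"

text \<open>Z1, Z2, Z3 (rb = rbar, Ut = tilde U^(1)).\<close>
definition Z1 :: "real mat \<Rightarrow> real mat \<Rightarrow> (nat \<Rightarrow> real) \<Rightarrow> nat \<Rightarrow> nat \<Rightarrow> real mat \<Rightarrow> real mat" where
  "Z1 U V sig r rb E =
     (let U2 = col_block U rb r; V2 = col_block V rb r; S2 = sig_block sig rb r in
      U2 * S2 * V2\<^sup>T * E\<^sup>T + E * V2 * S2 * U2\<^sup>T + E * V2 * V2\<^sup>T * E\<^sup>T)"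

definition Z2 :: "real mat \<Rightarrow> (nat \<Rightarrow> real) \<Rightarrow> nat \<Rightarrow> nat \<Rightarrow> real mat \<Rightarrow> real mat" where
  "Z2 U sig r rb Ut =
     (let U2 = col_block U rb r; S2 = sig_block sig rb r in
      proj Ut * U2 * (S2 * S2) * U2\<^sup>T * proj_perp Ut + U2 * (S2 * S2) * U2\<^sup>T * proj Ut)"

definition Z3 :: "real mat \<Rightarrow> real mat \<Rightarrow> real mat" where
  "Z3 V E = offdiag (E * E\<^sup>T - E * V * V\<^sup>T * E\<^sup>T)"

end

theory Submission
  imports Defs
begin

lemma vnorm_L2: "vnorm v = L2_set (\<lambda>i. v $ i) {0..<dim_vec v}"
  unfolding vnorm_def L2_set_def scalar_prod_def by (simp add: power2_eq_square)

lemma vnorm_nonneg: "0 \<le> vnorm v"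
  unfolding vnorm_L2 by (rule L2_set_nonneg)

lemma sp_self_nonneg: "0 \<le> (v::real vec) \<bullet> v"
  unfolding scalar_prod_def by (auto intro: sum_nonneg)

lemma vnorm_sq: "(vnorm v)^2 = v \<bullet> v"
  unfolding vnorm_def using sp_self_nonneg by simp

lemma CS_vec:
  assumes "dim_vec (v::real vec) = dim_vec w"
  shows "\<bar>v \<bullet> w\<bar> \<le> vnorm v * vnorm w"
proof -
  have "\<bar>v \<bullet> w\<bar> \<le> (\<Sum>i\<in>{0..<dim_vec w}. \<bar>v $ i\<bar> * \<bar>w $ i\<bar>)"
    unfolding scalar_prod_def by (metis (no_types, lifting) abs_mult sum.cong sum_abs)
  also have "\<dots> \<le> vnorm v * vnorm w"
    unfolding vnorm_L2 using assms L2_set_mult_ineq by metis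
  finally show ?thesis .
qed

lemma vnorm_add:
  assumes "dim_vec (v::real vec) = dim_vec w"
  shows "vnorm (v + w) \<le> vnorm v + vnorm w"
proof -
  have "vnorm (v + w) = L2_set (\<lambda>i. v $ i + w $ i) {0..<dim_vec w}"
    unfolding vnorm_L2 using assms by (intro L2_set_cong) auto
  also have "\<dots> \<le> vnorm v + vnorm w" unfolding vnorm_L2 using assms
    by (metis L2_set_triangle_ineq)
  finally show ?thesis .
qed

lemma vnorm_uminus: "vnorm (- v) = vnorm (v::real vec)"
  unfolding vnorm_L2 L2_set_def by simp

lemma vnorm_minus:
  assumes "dim_vec (v::real vec) = dim_vec w"
  shows "vnorm (v - w) \<le> vnorm v + vnorm w"
proof -
  have "v - w = v + (- w)" using assms by auto
  then show ?thesis using vnorm_add[of v "-w"] assms vnorm_uminus[of w] by auto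
qed

lemma vnorm_smult: "vnorm (c \<cdot>\<^sub>v v) = \<bar>c\<bar> * vnorm (v::real vec)"
proof -
  have "vnorm (c \<cdot>\<^sub>v v) = L2_set (\<lambda>i. c * v $ i) {0..<dim_vec v}"
    unfolding vnorm_L2 by (intro L2_set_cong) auto
  also have "\<dots> = L2_set (\<lambda>i. \<bar>c\<bar> * v $ i) {0..<dim_vec v}"
    unfolding L2_set_def by (simp add: power_mult_distrib)
  finally show ?thesis unfolding vnorm_L2 by (simp add: L2_set_right_distrib)
qed

lemma vnorm_zero_iff: "vnorm v = 0 \<longleftrightarrow> v = 0\<^sub>v (dim_vec (v::real vec))"
proof
  assume "vnorm v = 0"
  then have "(\<Sum>i\<in>{0..<dim_vec v}. (v $ i)^2) = 0" unfolding vnorm_L2 L2_set_def by simp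
  then have h: "\<forall>i\<in>{0..<dim_vec v}. (v $ i)^2 = 0" by (subst (asm) sum_nonneg_eq_0_iff) auto
  show "v = 0\<^sub>v (dim_vec v)"
  proof (rule eq_vecI)
    fix i assume "i < dim_vec (0\<^sub>v (dim_vec v))"
    then show "v $ i = 0\<^sub>v (dim_vec v) $ i" using h by simp
  qed simp
next
  assume "v = 0\<^sub>v (dim_vec v)"
  then show "vnorm v = 0" unfolding vnorm_L2 L2_set_def
    by (metis (no_types, lifting) index_zero_vec(1) power_zero_numeral real_sqrt_zero sum.neutral atLeastLessThan_iff)
qed

lemma vnorm_unit: "i < n \<Longrightarrow> vnorm (unit_vec n i) = 1"
  unfolding vnorm_def by simp


definition opb :: "real mat \<Rightarrow> real \<Rightarrow> bool" where
  "opb M c \<longleftrightarrow> (\<forall>v \<in> carrier_vec (dim_col M). vnorm (M *\<^sub>v v) \<le> c * vnorm v)"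

definition rowb :: "real mat \<Rightarrow> real \<Rightarrow> bool" where
  "rowb M c \<longleftrightarrow> (\<forall>i<dim_row M. vnorm (row M i) \<le> c)"

lemma opbD: "opb M c \<Longrightarrow> v \<in> carrier_vec (dim_col M) \<Longrightarrow> vnorm (M *\<^sub>v v) \<le> c * vnorm v"
  unfolding opb_def by auto

lemma opb_mono: "opb M c \<Longrightarrow> c \<le> d \<Longrightarrow> opb M d"
  unfolding opb_def by (meson order_trans mult_right_mono vnorm_nonneg)

lemma rowb_mono: "rowb M c \<Longrightarrow> c \<le> d \<Longrightarrow> rowb M d"
  unfolding rowb_def by force

lemma opb_exists: "\<exists>c\<ge>0. opb M c"
proof -
  let ?c = "\<Sum>i\<in>{0..<dim_row M}. vnorm (row M i)"
  have "opb M ?c" unfolding opb_def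
  proof
    fix v :: "real vec" assume v: "v \<in> carrier_vec (dim_col M)"
    have "vnorm (M *\<^sub>v v) = L2_set (\<lambda>i. row M i \<bullet> v) {0..<dim_row M}"
      unfolding vnorm_L2 by (intro L2_set_cong) auto
    also have "\<dots> \<le> (\<Sum>i\<in>{0..<dim_row M}. \<bar>row M i \<bullet> v\<bar>)" by (rule L2_set_le_sum_abs)
    also have "\<dots> \<le> (\<Sum>i\<in>{0..<dim_row M}. vnorm (row M i) * vnorm v)"
      using v by (intro sum_mono CS_vec) auto
    finally show "vnorm (M *\<^sub>v v) \<le> ?c * vnorm v" by (simp add: sum_distrib_right)
  qed
  moreover have "?c \<ge> 0" by (intro sum_nonneg) (auto simp: vnorm_nonneg)
  ultimately show ?thesis by blast
qed

lemma spec_set_bdd: "bdd_above {vnorm (A *\<^sub>v v) | v. v \<in> carrier_vec (dim_col A) \<and> vnorm v \<le> 1}"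
proof -
  obtain c where c: "c \<ge> 0" "opb A c" using opb_exists by blast
  show ?thesis
  proof (rule bdd_aboveI)
    fix x assume "x \<in> {vnorm (A *\<^sub>v v) | v. v \<in> carrier_vec (dim_col A) \<and> vnorm v \<le> 1}"
    then obtain v where v: "v \<in> carrier_vec (dim_col A)" "vnorm v \<le> 1" "x = vnorm (A *\<^sub>v v)" by blast
    have "x \<le> c * vnorm v" using c v opbD by blast
    also have "\<dots> \<le> c" using c v by (simp add: mult_left_le)
    finally show "x \<le> c" .
  qed
qed

lemma vnorm_zero_vec[simp]: "vnorm (0\<^sub>v n) = 0"
  using vnorm_zero_iff by auto

lemma mult_zero_vec: "A *\<^sub>v 0\<^sub>v (dim_col A) = 0\<^sub>v (dim_row (A::real mat))"
  by (intro eq_vecI) (auto simp: scalar_prod_def)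

lemma spec_nonneg: "0 \<le> spec_norm A"
proof -
  have "0 \<in> {vnorm (A *\<^sub>v v) | v. v \<in> carrier_vec (dim_col A) \<and> vnorm v \<le> 1}"
    by (intro CollectI exI[of _ "0\<^sub>v (dim_col A)"]) (simp add: mult_zero_vec)
  then show ?thesis unfolding spec_norm_def using spec_set_bdd[of A] by (meson cSup_upper)
qed

lemma spec_le: assumes "0 \<le> c" "opb A c" shows "spec_norm A \<le> c"
  unfolding spec_norm_def
proof (rule cSup_least)
  show "{vnorm (A *\<^sub>v v) | v. v \<in> carrier_vec (dim_col A) \<and> vnorm v \<le> 1} \<noteq> {}"
    by (intro ex_in_conv[THEN iffD1] exI[of _ "vnorm (A *\<^sub>v 0\<^sub>v (dim_col A))"]) auto
next
  fix x assume "x \<in> {vnorm (A *\<^sub>v v) | v. v \<in> carrier_vec (dim_col A) \<and> vnorm v \<le> 1}"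
  then obtain v where v: "v \<in> carrier_vec (dim_col A)" "vnorm v \<le> 1" "x = vnorm (A *\<^sub>v v)" by blast
  have "x \<le> c * vnorm v" using assms v opbD by blast
  also have "\<dots> \<le> c" using assms v by (simp add: mult_left_le)
  finally show "x \<le> c" .
qed

lemma opb_spec: "opb A (spec_norm A)"
  unfolding opb_def
proof
  fix v :: "real vec" assume v: "v \<in> carrier_vec (dim_col A)"
  show "vnorm (A *\<^sub>v v) \<le> spec_norm A * vnorm v"
  proof (cases "vnorm v = 0")
    case True
    then have "v = 0\<^sub>v (dim_col A)" using v vnorm_zero_iff by auto
    then show ?thesis by (simp add: mult_zero_vec spec_nonneg)
  next
    case False
    then have pos: "vnorm v > 0" using vnorm_nonneg[of v] by linarith
    define u where "u = (1 / vnorm v) \<cdot>\<^sub>v v"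
    have u: "u \<in> carrier_vec (dim_col A)" "vnorm u = 1"
      using v pos unfolding u_def by (auto simp: vnorm_smult)
    have Au: "A *\<^sub>v u = (1 / vnorm v) \<cdot>\<^sub>v (A *\<^sub>v v)"
      unfolding u_def using v by (intro mult_mat_vec[of _ "dim_row A" "dim_col A"]) auto
    have "vnorm (A *\<^sub>v u) \<le> spec_norm A" unfolding spec_norm_def
      using u by (intro cSup_upper spec_set_bdd) auto
    then have "vnorm (A *\<^sub>v v) / vnorm v \<le> spec_norm A" using Au pos by (simp add: vnorm_smult)
    then show ?thesis using pos by (simp add: divide_le_eq mult.commute)
  qed
qed

lemma n2i_nonneg: "0 \<le> norm_2inf A"
  unfolding norm_2inf_def by (rule Max_ge) auto

lemma rowb_n2i: "rowb A (norm_2inf A)"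
  unfolding rowb_def norm_2inf_def by (auto intro!: Max_ge)

lemma n2i_le: assumes "0 \<le> c" "rowb A c" shows "norm_2inf A \<le> c"
  unfolding norm_2inf_def using assms unfolding rowb_def by (auto intro!: Max.boundedI)


lemma opb_mult:
  assumes A: "A \<in> carrier_mat nr n" and B: "B \<in> carrier_mat n nc"
    and "opb A a" "opb B b" "0 \<le> a"
  shows "opb (A * B) (a * b)"
  unfolding opb_def
proof
  fix v :: "real vec" assume v: "v \<in> carrier_vec (dim_col (A * B))"
  then have v': "v \<in> carrier_vec nc" using B by auto
  have "(A * B) *\<^sub>v v = A *\<^sub>v (B *\<^sub>v v)" using A B v' by (rule assoc_mult_mat_vec)
  moreover have "vnorm (A *\<^sub>v (B *\<^sub>v v)) \<le> a * vnorm (B *\<^sub>v v)"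
  proof -
    have "B *\<^sub>v v \<in> carrier_vec n" using B v' by (metis mult_mat_vec_carrier)
    then show ?thesis using assms(3) A by (intro opbD) auto
  qed
  moreover have "a * vnorm (B *\<^sub>v v) \<le> a * (b * vnorm v)"
    using assms(4,5) B v' by (intro mult_left_mono opbD) auto
  ultimately show "vnorm ((A * B) *\<^sub>v v) \<le> a * b * vnorm v" by (simp add: mult.assoc)
qed

lemma opb_add:
  assumes A: "A \<in> carrier_mat nr nc" and B: "B \<in> carrier_mat nr nc"
    and "opb A a" "opb B b"
  shows "opb (A + B) (a + b)"
  unfolding opb_def
proof
  fix v :: "real vec" assume v: "v \<in> carrier_vec (dim_col (A + B))"
  then have v': "v \<in> carrier_vec nc" using B by auto
  have "(A + B) *\<^sub>v v = A *\<^sub>v v + B *\<^sub>v v" using A B v' by (rule add_mult_distrib_mat_vec)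
  moreover have "vnorm (A *\<^sub>v v + B *\<^sub>v v) \<le> vnorm (A *\<^sub>v v) + vnorm (B *\<^sub>v v)"
    using A B by (intro vnorm_add) auto
  moreover have "vnorm (A *\<^sub>v v) \<le> a * vnorm v" "vnorm (B *\<^sub>v v) \<le> b * vnorm v"
    using assms v' by (auto intro: opbD)
  ultimately show "vnorm ((A + B) *\<^sub>v v) \<le> (a + b) * vnorm v" by (simp add: algebra_simps)
qed

lemma opb_minus:
  assumes A: "A \<in> carrier_mat nr nc" and B: "B \<in> carrier_mat nr nc"
    and "opb A a" "opb B b"
  shows "opb (A - B) (a + b)"
  unfolding opb_def
proof
  fix v :: "real vec" assume v: "v \<in> carrier_vec (dim_col (A - B))"
  then have v': "v \<in> carrier_vec nc" using B by auto
  have "(A - B) *\<^sub>v v = A *\<^sub>v v - B *\<^sub>v v" using A B v' by (rule minus_mult_distrib_mat_vec)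
  moreover have "vnorm (A *\<^sub>v v - B *\<^sub>v v) \<le> vnorm (A *\<^sub>v v) + vnorm (B *\<^sub>v v)"
    using A B by (intro vnorm_minus) auto
  moreover have "vnorm (A *\<^sub>v v) \<le> a * vnorm v" "vnorm (B *\<^sub>v v) \<le> b * vnorm v"
    using assms v' by (auto intro: opbD)
  ultimately show "vnorm ((A - B) *\<^sub>v v) \<le> (a + b) * vnorm v" by (simp add: algebra_simps)
qed

lemma opb_transpose:
  assumes A: "A \<in> carrier_mat nr nc" and "opb A a" "0 \<le> a"
  shows "opb A\<^sup>T a"
  unfolding opb_def
proof
  fix w :: "real vec" assume w: "w \<in> carrier_vec (dim_col A\<^sup>T)"
  then have w': "w \<in> carrier_vec nr" using A by auto
  define u where "u = A\<^sup>T *\<^sub>v w"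
  have u: "u \<in> carrier_vec nc" unfolding u_def using A w' by (metis mult_mat_vec_carrier transpose_carrier_mat)
  have "(vnorm u)^2 = u \<bullet> u" by (rule vnorm_sq)
  also have "\<dots> = w \<bullet> (A *\<^sub>v u)" unfolding u_def using A u w'
    by (intro transpose_vec_mult_scalar) (auto simp: u_def)
  also have "\<dots> \<le> \<bar>w \<bullet> (A *\<^sub>v u)\<bar>" by simp
  also have "\<dots> \<le> vnorm w * vnorm (A *\<^sub>v u)" using A w' by (intro CS_vec) auto
  also have "\<dots> \<le> vnorm w * (a * vnorm u)"
    using assms u A by (intro mult_left_mono opbD) (auto simp: vnorm_nonneg)
  finally have *: "(vnorm u)^2 \<le> (a * vnorm w) * vnorm u" by (simp add: algebra_simps)
  show "vnorm (A\<^sup>T *\<^sub>v w) \<le> a * vnorm w"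
  proof (cases "vnorm u = 0")
    case True then show ?thesis using assms(3) vnorm_nonneg[of w] unfolding u_def by simp
  next
    case False
    then have "vnorm u > 0" using vnorm_nonneg[of u] by linarith
    then show ?thesis using * unfolding u_def by (simp add: power2_eq_square)
  qed
qed

lemma opb_orth:
  assumes U: "U \<in> carrier_mat n k" and o: "orthonormal_cols U"
  shows "opb U 1"
  unfolding opb_def
proof
  fix v :: "real vec" assume v: "v \<in> carrier_vec (dim_col U)"
  then have v': "v \<in> carrier_vec k" using U by auto
  have "(vnorm (U *\<^sub>v v))^2 = (U *\<^sub>v v) \<bullet> (U *\<^sub>v v)" by (rule vnorm_sq)
  also have "\<dots> = (U\<^sup>T *\<^sub>v (U *\<^sub>v v)) \<bullet> v" using U v'
    by (intro transpose_vec_mult_scalar[symmetric]) auto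
  also have "U\<^sup>T *\<^sub>v (U *\<^sub>v v) = (U\<^sup>T * U) *\<^sub>v v" using U v' by (intro assoc_mult_mat_vec[symmetric]) auto
  also have "\<dots> = v" using o U v' unfolding orthonormal_cols_def by auto
  finally have "(vnorm (U *\<^sub>v v))^2 = (vnorm v)^2" by (simp add: vnorm_sq)
  then show "vnorm (U *\<^sub>v v) \<le> 1 * vnorm v" using vnorm_nonneg
    by (metis mult_1 order_refl power2_eq_imp_eq)
qed

lemma opb_one: "opb (1\<^sub>m n) 1"
  unfolding opb_def by auto

lemma opb_pow:
  assumes A: "A \<in> carrier_mat n n" and "opb A a" "0 \<le> a"
  shows "opb (A ^\<^sub>m k) (a ^ k)"
proof (induction k)
  case 0 then show ?case using A opb_one by auto
next
  case (Suc k)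
  have "opb (A ^\<^sub>m k * A) (a ^ k * a)"
    using Suc assms by (intro opb_mult[of _ n n _ n]) auto
  then show ?case by (simp add: mult.commute)
qed

lemma row_as_transpose:
  assumes A: "(A::real mat) \<in> carrier_mat nr nc" and i: "i < nr"
  shows "row A i = A\<^sup>T *\<^sub>v unit_vec nr i"
proof (rule eq_vecI)
  fix j assume "j < dim_vec (A\<^sup>T *\<^sub>v unit_vec nr i)"
  then have j: "j < nc" using A by auto
  have "(A\<^sup>T *\<^sub>v unit_vec nr i) $ j = col A j \<bullet> unit_vec nr i" using A j by auto
  also have "\<dots> = col A j $ i" using i by simp
  finally show "row A i $ j = (A\<^sup>T *\<^sub>v unit_vec nr i) $ j" using A i j by auto
qed (use A in auto)

lemma rowb_of_opb:
  assumes A: "A \<in> carrier_mat nr nc" and "opb A c" "0 \<le> c"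
  shows "rowb A c"
  unfolding rowb_def
proof (intro allI impI)
  fix i assume "i < dim_row A"
  then have i: "i < nr" using A by auto
  have "opb A\<^sup>T c" using assms by (rule opb_transpose)
  then have "vnorm (A\<^sup>T *\<^sub>v unit_vec nr i) \<le> c * vnorm (unit_vec nr i)"
    using A by (intro opbD) auto
  then show "vnorm (row A i) \<le> c" using row_as_transpose[OF A i] vnorm_unit[OF i] by simp
qed

lemma rowb_mult:
  assumes A: "A \<in> carrier_mat nr n" and B: "B \<in> carrier_mat n nc"
    and "rowb A a" "opb B b" "0 \<le> b"
  shows "rowb (A * B) (a * b)"
  unfolding rowb_def
proof (intro allI impI)
  fix i assume "i < dim_row (A * B)"
  then have i: "i < nr" using A by auto
  have r: "row (A * B) i = B\<^sup>T *\<^sub>v row A i"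
    using A B i by (intro eq_vecI) (auto simp: comm_scalar_prod[of _ n])
  have "opb B\<^sup>T b" using B assms by (intro opb_transpose) auto
  then have "vnorm (B\<^sup>T *\<^sub>v row A i) \<le> b * vnorm (row A i)" using A B by (intro opbD) auto
  also have "\<dots> \<le> b * a" using assms i A unfolding rowb_def by (intro mult_left_mono) auto
  finally show "vnorm (row (A * B) i) \<le> a * b" using r by (simp add: mult.commute)
qed

lemma rowb_add:
  assumes A: "A \<in> carrier_mat nr nc" and B: "B \<in> carrier_mat nr nc"
    and "rowb A a" "rowb B b"
  shows "rowb (A + B) (a + b)"
  unfolding rowb_def
proof (intro allI impI)
  fix i assume "i < dim_row (A + B)"
  then have i: "i < nr" using A B by auto
  have "row (A + B) i = row A i + row B i" using A B i by (rule row_add)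
  moreover have "vnorm (row A i + row B i) \<le> vnorm (row A i) + vnorm (row B i)"
    using A B by (intro vnorm_add) auto
  ultimately show "vnorm (row (A + B) i) \<le> a + b" using assms i unfolding rowb_def by force
qed

lemma rowb_minus:
  assumes A: "A \<in> carrier_mat nr nc" and B: "B \<in> carrier_mat nr nc"
    and "rowb A a" "rowb B b"
  shows "rowb (A - B) (a + b)"
  unfolding rowb_def
proof (intro allI impI)
  fix i assume "i < dim_row (A - B)"
  then have i: "i < nr" using A B by auto
  have "row (A - B) i = row A i - row B i" using A B i by (intro eq_vecI) auto
  moreover have "vnorm (row A i - row B i) \<le> vnorm (row A i) + vnorm (row B i)"
    using A B by (intro vnorm_minus) auto
  ultimately show "vnorm (row (A - B) i) \<le> a + b" using assms i unfolding rowb_def by force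
qed

lemma opb_diag:
  assumes D: "D \<in> carrier_mat n n" and off: "\<And>i j. i < n \<Longrightarrow> j < n \<Longrightarrow> i \<noteq> j \<Longrightarrow> D $$ (i,j) = 0"
    and d: "\<And>i. i < n \<Longrightarrow> \<bar>D $$ (i,i)\<bar> \<le> d"
  shows "opb D d"
  unfolding opb_def
proof
  fix v :: "real vec" assume v: "v \<in> carrier_vec (dim_col D)"
  then have v': "dim_vec v = n" using D by auto
  have e: "(D *\<^sub>v v) $ i = D $$ (i,i) * v $ i" if i: "i < n" for i
  proof -
    have "(D *\<^sub>v v) $ i = (\<Sum>j\<in>{0..<n}. D $$ (i,j) * v $ j)"
      using D v' i by (auto simp: scalar_prod_def)
    also have "\<dots> = D $$ (i,i) * v $ i"
      using i off by (subst sum.remove[of _ i]) (auto intro!: sum.neutral)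
    finally show ?thesis .
  qed
  have "vnorm (D *\<^sub>v v) = L2_set (\<lambda>i. D $$ (i,i) * v $ i) {0..<n}"
    unfolding vnorm_L2 using D e by (intro L2_set_cong) auto
  also have "\<dots> = L2_set (\<lambda>i. \<bar>D $$ (i,i)\<bar> * \<bar>v $ i\<bar>) {0..<n}"
    unfolding L2_set_def by (simp add: power_mult_distrib)
  also have "\<dots> \<le> L2_set (\<lambda>i. d * \<bar>v $ i\<bar>) {0..<n}"
    using d by (intro L2_set_mono mult_right_mono) auto
  also have "\<dots> = d * vnorm v"
  proof (cases "n = 0")
    case True then show ?thesis using v' unfolding vnorm_L2 by (simp add: L2_set_def)
  next
    case False
    have "\<bar>D $$ (0,0)\<bar> \<le> d" using d[of 0] False by simp
    then have "0 \<le> d" using abs_ge_zero[of "D $$ (0,0)"] by linarith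
    then show ?thesis using v' unfolding vnorm_L2 L2_set_def
      by (simp add: power_mult_distrib sum_distrib_left[symmetric] real_sqrt_mult)
  qed
  finally show "vnorm (D *\<^sub>v v) \<le> d * vnorm v" .
qed

lemma arith_step:
  fixes c5 c3 a s \<alpha> b2 b3 :: real
  assumes c5: "1 \<le> c5" and c3: "c3 = 10 * c5" and a: "0 \<le> a" "a \<le> s" and al: "0 \<le> \<alpha>"
    and b2: "b2 \<le> (5*c5 * s)^j * (3*c5 * s)^m * (\<alpha>*c5*a)"
    and b3: "b3 \<le> (c3 * s)^j * (3*c5 * s)^m * (\<alpha>*c5*a)"
  shows "\<alpha> * s^(Suc j+m) * c3^(Suc j+m) * (2 - 1/2^m) + b2 + b3
         \<le> \<alpha> * s^(j+Suc m) * c3^(j+Suc m) * (2 - 1/2^(Suc m))"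
proof -
  have s: "0 \<le> s" using a by linarith
  define K where "K = \<alpha> * c5 * s^(j+m+1) * c3^j * (5*c5)^m"
  have K0: "0 \<le> K" unfolding K_def using al c5 s c3 by auto
  have p1: "(5*c5)^j \<le> c3^j" using c3 c5 by (intro power_mono) auto
  have p2: "(3*c5)^m \<le> (5*c5)^m" using c5 by (intro power_mono) auto
  have e2: "(5*c5 * s)^j * (3*c5 * s)^m * (\<alpha>*c5*a) = (\<alpha>*c5) * s^(j+m) * a * ((5*c5)^j * (3*c5)^m)"
    by (simp add: power_mult_distrib power_add)
  have "(\<alpha>*c5) * s^(j+m) * a * ((5*c5)^j * (3*c5)^m) \<le> (\<alpha>*c5) * s^(j+m) * s * (c3^j * (5*c5)^m)"
  proof (rule mult_mono)
    show "(5*c5)^j * (3*c5)^m \<le> c3^j * (5*c5)^m" using p1 p2 c5 c3 by (intro mult_mono) auto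
    show "(\<alpha>*c5) * s^(j+m) * a \<le> (\<alpha>*c5) * s^(j+m) * s" using a s al c5 by (intro mult_left_mono) auto
  qed (use a s al c5 c3 in auto)
  also have "\<dots> = K" unfolding K_def by (simp add: power_add)
  finally have B2: "b2 \<le> K" using b2 e2 by linarith
  have e3: "(c3 * s)^j * (3*c5 * s)^m * (\<alpha>*c5*a) = (\<alpha>*c5) * s^(j+m) * a * (c3^j * (3*c5)^m)"
    by (simp add: power_mult_distrib power_add)
  have "(\<alpha>*c5) * s^(j+m) * a * (c3^j * (3*c5)^m) \<le> (\<alpha>*c5) * s^(j+m) * s * (c3^j * (5*c5)^m)"
  proof (rule mult_mono)
    show "c3^j * (3*c5)^m \<le> c3^j * (5*c5)^m" using p2 c5 c3 by (intro mult_left_mono) auto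
    show "(\<alpha>*c5) * s^(j+m) * a \<le> (\<alpha>*c5) * s^(j+m) * s" using a s al c5 by (intro mult_left_mono) auto
  qed (use a s al c5 c3 in auto)
  also have "\<dots> = K" unfolding K_def by (simp add: power_add)
  finally have B3: "b3 \<le> K" using b3 e3 by linarith
  have c3h: "c3 / 2 = 5 * c5" using c3 by simp
  have "\<alpha> * s^(j+Suc m) * c3^(j+Suc m) * (2 - 1/2^(Suc m)) - \<alpha> * s^(Suc j+m) * c3^(Suc j+m) * (2 - 1/2^m)
      = \<alpha> * s^(j+m+1) * c3^j * (c3^(Suc m) / 2^(Suc m))"
    by (simp add: power_add field_simps)
  also have "c3^(Suc m) / 2^(Suc m) = (c3/2)^(Suc m)" by (simp add: power_divide)
  also have "\<dots> = (5*c5)^m * (5 * c5)" using c3h by simp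
  finally have eq: "\<alpha> * s^(j+Suc m) * c3^(j+Suc m) * (2 - 1/2^(Suc m)) - \<alpha> * s^(Suc j+m) * c3^(Suc j+m) * (2 - 1/2^m)
     = \<alpha> * s^(j+m+1) * c3^j * ((5*c5)^m * (5 * c5))" .
  have "\<alpha> * s^(j+m+1) * c3^j * ((5*c5)^m * (5 * c5)) = 5 * K" unfolding K_def by (simp add: ac_simps)
  with eq have "\<alpha> * s^(j+Suc m) * c3^(j+Suc m) * (2 - 1/2^(Suc m)) - \<alpha> * s^(Suc j+m) * c3^(Suc j+m) * (2 - 1/2^m) = 5 * K"
    by simp
  then show ?thesis using B2 B3 K0 by linarith
qed

lemma pow_mat_Suc_left:
  assumes Z: "(Z::real mat) \<in> carrier_mat n n"
  shows "Z ^\<^sub>m Suc k = Z * Z ^\<^sub>m k"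
proof (induction k)
  case 0 then show ?case using Z by simp
next
  case (Suc k)
  have "Z ^\<^sub>m Suc (Suc k) = (Z * Z ^\<^sub>m k) * Z" using Suc by simp
  also have "\<dots> = Z * (Z ^\<^sub>m k * Z)" using Z by (intro assoc_mult_mat[of _ n n _ n _ n]) auto
  finally show ?case by simp
qed

lemma core:
  fixes A Z D Y X :: "real mat"
  assumes A: "A \<in> carrier_mat n n" and Zc: "Z \<in> carrier_mat n n" and Dc: "D \<in> carrier_mat n n"
    and Yc: "Y \<in> carrier_mat n k" and Xc: "X \<in> carrier_mat n q"
    and Zeq: "Z = A + D - Y * Y\<^sup>T"
    and c5: "1 \<le> c5" and c3: "c3 = 10 * c5" and a: "0 \<le> a" "a \<le> s" and al: "0 \<le> \<alpha>"
    and oZ: "opb Z (3*c5 * s)" and oA: "opb A (5*c5 * s)" and oD: "opb D d" and oY: "opb Y y" and oX: "opb X x"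
    and nn: "0 \<le> d" "0 \<le> y" "0 \<le> x" "0 \<le> \<eta>"
    and H1: "\<And>j. real j \<le> N \<Longrightarrow> rowb (A ^\<^sub>m j * X) (\<alpha> * (c3 * s)^j)"
    and H2: "\<And>j. real j \<le> N \<Longrightarrow> rowb (A ^\<^sub>m j * Y) (\<eta> * (c3 * s)^j)"
    and H2': "\<eta> * y * x \<le> \<alpha> * c5 * a"
    and H3: "d * x \<le> \<alpha> * c5 * a"
  shows "real (j + m) \<le> N \<Longrightarrow> rowb (A ^\<^sub>m j * (Z ^\<^sub>m m * X)) (\<alpha> * s^(j+m) * c3^(j+m) * (2 - 1/2^m))"
proof (induction m arbitrary: j)
  case 0
  have e1: "Z ^\<^sub>m 0 * X = X" using Zc Xc by simp
  have e2: "\<alpha> * s^(j+0) * c3^(j+0) * (2 - 1/2^0) = \<alpha> * (c3 * s)^j"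
    by (simp add: power_mult_distrib mult_ac)
  show ?case unfolding e1 e2 using H1[of j] 0 by simp
next
  case (Suc m)
  have s: "0 \<le> s" using a by linarith
  have c30: "0 \<le> c3" using c3 c5 by simp
  define W where "W = Z ^\<^sub>m m * X"
  have Wc: "W \<in> carrier_mat n q" unfolding W_def using Zc Xc by auto
  have Ajc: "A ^\<^sub>m j \<in> carrier_mat n n" using A by auto
  have "A ^\<^sub>m j * (Z ^\<^sub>m Suc m * X) = A ^\<^sub>m j * (Z * W)"
    unfolding W_def using Zc Xc pow_mat_Suc_left[OF Zc, of m]
    by (simp add: assoc_mult_mat[of _ n n _ n _ q])
  also have "Z * W = A * W + D * W - Y * (Y\<^sup>T * W)"
  proof -
    have "Z * W = (A + D) * W - (Y * Y\<^sup>T) * W" unfolding Zeq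
      using A Dc Yc Wc by (intro minus_mult_distrib_mat[of _ n n]) auto
    also have "(A + D) * W = A * W + D * W" using A Dc Wc by (intro add_mult_distrib_mat) auto
    also have "(Y * Y\<^sup>T) * W = Y * (Y\<^sup>T * W)" using Yc Wc by (intro assoc_mult_mat[of _ n k _ n _ q]) auto
    finally show ?thesis .
  qed
  also have "A ^\<^sub>m j * (A * W + D * W - Y * (Y\<^sup>T * W))
      = A ^\<^sub>m (Suc j) * W + A ^\<^sub>m j * (D * W) - (A ^\<^sub>m j * Y) * (Y\<^sup>T * W)"
  proof -
    have "A ^\<^sub>m j * (A * W + D * W - Y * (Y\<^sup>T * W)) = A ^\<^sub>m j * (A * W + D * W) - A ^\<^sub>m j * (Y * (Y\<^sup>T * W))"
      using Ajc A Dc Yc Wc by (intro mult_minus_distrib_mat[of _ n n _ q]) auto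
    also have "A ^\<^sub>m j * (A * W + D * W) = A ^\<^sub>m j * (A * W) + A ^\<^sub>m j * (D * W)"
      using Ajc A Dc Wc by (intro mult_add_distrib_mat[of _ n n _ q]) auto
    also have "A ^\<^sub>m j * (A * W) = A ^\<^sub>m (Suc j) * W"
      using Ajc A Wc by (simp add: assoc_mult_mat[of _ n n _ n _ q])
    also have "A ^\<^sub>m j * (Y * (Y\<^sup>T * W)) = (A ^\<^sub>m j * Y) * (Y\<^sup>T * W)"
      using Ajc Yc Wc by (intro assoc_mult_mat[symmetric, of _ n n _ k _ q]) auto
    finally show ?thesis .
  qed
  finally have eq: "A ^\<^sub>m j * (Z ^\<^sub>m Suc m * X) = A ^\<^sub>m (Suc j) * W + A ^\<^sub>m j * (D * W) - (A ^\<^sub>m j * Y) * (Y\<^sup>T * W)" .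
  define b1 where "b1 = \<alpha> * s^(Suc j+m) * c3^(Suc j+m) * (2 - 1/2^m)"
  define b2 where "b2 = (5*c5 * s)^j * (d * ((3*c5 * s)^m * x))"
  define b3 where "b3 = (\<eta> * (c3 * s)^j) * (y * ((3*c5 * s)^m * x))"
  have oW: "opb W ((3*c5 * s)^m * x)" unfolding W_def
    using Zc Xc oZ oX c5 s by (intro opb_mult[of _ n n] opb_pow) auto
  have R1: "rowb (A ^\<^sub>m (Suc j) * W) b1" unfolding b1_def W_def
    by (rule Suc.IH) (use Suc.prems in simp)
  have R2: "rowb (A ^\<^sub>m j * (D * W)) b2"
  proof -
    have "opb (A ^\<^sub>m j * (D * W)) b2" unfolding b2_def
      using Ajc Dc Wc A oA oD oW c5 s nn
      by (intro opb_mult[of _ n n _ q] opb_pow) (auto intro: mult_nonneg_nonneg)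
    moreover have "0 \<le> b2" unfolding b2_def using c5 s nn by auto
    ultimately show ?thesis using Ajc Dc Wc by (intro rowb_of_opb[of _ n q]) auto
  qed
  have R3: "rowb ((A ^\<^sub>m j * Y) * (Y\<^sup>T * W)) b3" unfolding b3_def
  proof (rule rowb_mult[of _ n k _ q])
    show "rowb (A ^\<^sub>m j * Y) (\<eta> * (c3 * s) ^ j)" using H2 Suc.prems by simp
    show "opb (Y\<^sup>T * W) (y * ((3 * c5 * s) ^ m * x))"
      using Yc Wc oY oW nn by (intro opb_mult[of _ k n _ q] opb_transpose) auto
    show "0 \<le> y * ((3 * c5 * s) ^ m * x)" using nn c5 s by auto
  qed (use Ajc Yc Wc in auto)
  have "rowb (A ^\<^sub>m j * (Z ^\<^sub>m Suc m * X)) (b1 + b2 + b3)" unfolding eq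
    using Ajc A Dc Yc Wc R1 R2 R3 by (intro rowb_minus[of _ n q] rowb_add[of _ n q]) auto
  moreover have "b1 + b2 + b3 \<le> \<alpha> * s^(j+Suc m) * c3^(j+Suc m) * (2 - 1/2^(Suc m))"
    unfolding b1_def
  proof (rule arith_step[OF c5 c3 a al])
    have "d * x \<le> \<alpha> * c5 * a" by (rule H3)
    have P0: "0 \<le> (5 * c5 * s) ^ j * (3 * c5 * s) ^ m" using c5 s by simp
    have "b2 = ((5 * c5 * s) ^ j * (3 * c5 * s) ^ m) * (d * x)" unfolding b2_def by (simp add: mult_ac)
    then show "b2 \<le> (5 * c5 * s) ^ j * (3 * c5 * s) ^ m * (\<alpha> * c5 * a)"
      using mult_left_mono[OF H3 P0] by simp
    have "\<eta> * y * x \<le> \<alpha> * c5 * a" by (rule H2')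
    have P0: "0 \<le> (c3 * s) ^ j * (3 * c5 * s) ^ m" using c5 s c30 by simp
    have "b3 = ((c3 * s) ^ j * (3 * c5 * s) ^ m) * (\<eta> * y * x)" unfolding b3_def by (simp add: mult_ac)
    then show "b3 \<le> (c3 * s) ^ j * (3 * c5 * s) ^ m * (\<alpha> * c5 * a)"
      using mult_left_mono[OF H2' P0] by simp
  qed
  ultimately show ?case by (rule rowb_mono)
qed


lemma massoc: "dim_col (A::real mat) = dim_row B \<Longrightarrow> dim_col B = dim_row C \<Longrightarrow> A * B * C = A * (B * C)"
  by (rule assoc_mult_mat[of A "dim_row A" "dim_col A" B "dim_col B" C "dim_col C"]) auto

lemma mdistL: "dim_col (A::real mat) = dim_row B \<Longrightarrow> dim_row C = dim_row B \<Longrightarrow> dim_col C = dim_col B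
   \<Longrightarrow> A * (B + C) = A * B + A * C"
  by (rule mult_add_distrib_mat[of A "dim_row A" "dim_col A" B "dim_col B"]) auto

lemma mdistL_minus: "dim_col (A::real mat) = dim_row B \<Longrightarrow> dim_row C = dim_row B \<Longrightarrow> dim_col C = dim_col B
   \<Longrightarrow> A * (B - C) = A * B - A * C"
  by (rule mult_minus_distrib_mat[of A "dim_row A" "dim_col A" B "dim_col B"]) auto

lemma mdistR: "dim_row (A::real mat) = dim_row B \<Longrightarrow> dim_col A = dim_col B \<Longrightarrow> dim_col A = dim_row C
   \<Longrightarrow> (A + B) * C = A * C + B * C"
  by (rule add_mult_distrib_mat[of A "dim_row A" "dim_col A" B C "dim_col C"]) auto

lemma mdistR_minus: "dim_row (A::real mat) = dim_row B \<Longrightarrow> dim_col A = dim_col B \<Longrightarrow> dim_col A = dim_row C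
   \<Longrightarrow> (A - B) * C = A * C - B * C"
  by (rule minus_mult_distrib_mat[of A "dim_row A" "dim_col A" B C "dim_col C"]) auto

lemma mtrans: "dim_col (A::real mat) = dim_row B \<Longrightarrow> (A * B)\<^sup>T = B\<^sup>T * A\<^sup>T"
  by (rule transpose_mult[of A "dim_row A" "dim_col A" B "dim_col B"]) auto

definition sel :: "nat \<Rightarrow> nat \<Rightarrow> nat \<Rightarrow> real mat" where
  "sel a b r = mat r (b - a) (\<lambda>(i,j). if i = j + a then 1 else 0)"

lemma sel_carrier[simp]: "sel a b r \<in> carrier_mat r (b - a)" and sel_dims[simp]: "dim_row (sel a b r) = r" "dim_col (sel a b r) = b - a"
  unfolding sel_def by auto

lemma col_block_sel:
  assumes M: "M \<in> carrier_mat nr r" and b: "b \<le> r"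
  shows "col_block M a b = M * sel a b r"
proof (rule eq_matI)
  fix i j assume ij: "i < dim_row (M * sel a b r)" "j < dim_col (M * sel a b r)"
  then have i: "i < nr" and j: "j < b - a" using M by auto
  have "(M * sel a b r) $$ (i,j) = (\<Sum>k\<in>{0..<r}. M $$ (i,k) * (if k = j + a then 1 else 0))"
    using M i j unfolding sel_def by (auto simp: scalar_prod_def)
  also have "\<dots> = (\<Sum>k\<in>{0..<r}. if k = j + a then M $$ (i,k) else 0)" by (intro sum.cong) auto
  also have "\<dots> = M $$ (i, j + a)" using j b by simp
  finally show "col_block M a b $$ (i,j) = (M * sel a b r) $$ (i,j)"
    unfolding col_block_def using i j M by auto
qed (use M in \<open>auto simp: col_block_def\<close>)

lemma sel_orth:
  assumes "a \<le> b" "b \<le> r"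
  shows "orthonormal_cols (sel a b r)"
  unfolding orthonormal_cols_def
proof (rule eq_matI)
  fix i j assume ij: "i < dim_row (1\<^sub>m (dim_col (sel a b r)))" "j < dim_col (1\<^sub>m (dim_col (sel a b r)))"
  then have i: "i < b - a" and j: "j < b - a" by auto
  have "((sel a b r)\<^sup>T * sel a b r) $$ (i,j)
      = (\<Sum>k\<in>{0..<r}. (if k = i + a then 1 else 0) * (if k = j + a then 1 else (0::real)))"
    using i j unfolding sel_def by (auto simp: scalar_prod_def)
  also have "\<dots> = (\<Sum>k\<in>{0..<r}. if k = i + a then (if i = j then 1 else 0) else 0)" by (intro sum.cong) auto
  also have "\<dots> = (if i = j then 1 else 0)" using i j assms by auto
  finally show "((sel a b r)\<^sup>T * sel a b r) $$ (i,j) = 1\<^sub>m (dim_col (sel a b r)) $$ (i,j)"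
    using i j by auto
qed auto

lemma sel_disj:
  assumes "rb \<le> r"
  shows "(sel rb r r)\<^sup>T * sel 0 rb r = 0\<^sub>m (r - rb) rb"
proof (rule eq_matI)
  fix i j assume ij: "i < dim_row (0\<^sub>m (r - rb) rb)" "j < dim_col (0\<^sub>m (r - rb) rb)"
  then have i: "i < r - rb" and j: "j < rb" by auto
  have "((sel rb r r)\<^sup>T * sel 0 rb r) $$ (i,j)
      = (\<Sum>k\<in>{0..<r}. (if k = i + rb then 1 else 0) * (if k = j then 1 else (0::real)))"
    using i j unfolding sel_def by (auto simp: scalar_prod_def)
  also have "\<dots> = 0" using i j assms by (intro sum.neutral) auto
  finally show "((sel rb r r)\<^sup>T * sel 0 rb r) $$ (i,j) = 0\<^sub>m (r - rb) rb $$ (i,j)"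
    using i j by auto
qed auto


lemma n2i_zero:
  assumes "norm_2inf X \<le> 0"
  shows "X = 0\<^sub>m (dim_row X) (dim_col X)"
proof (rule eq_matI)
  fix i j assume ij: "i < dim_row (0\<^sub>m (dim_row X) (dim_col X))" "j < dim_col (0\<^sub>m (dim_row X) (dim_col X))"
  then have i: "i < dim_row X" and j: "j < dim_col X" by auto
  have "vnorm (row X i) \<le> 0" using rowb_n2i[of X] i assms unfolding rowb_def by force
  then have "vnorm (row X i) = 0" using vnorm_nonneg[of "row X i"] by linarith
  then have "row X i = 0\<^sub>v (dim_col X)" using vnorm_zero_iff by auto
  then have "row X i $ j = 0" using j by simp
  then show "X $$ (i,j) = 0\<^sub>m (dim_row X) (dim_col X) $$ (i,j)" using i j by simp
qed auto

lemma rowb_zero: "0 \<le> c \<Longrightarrow> rowb (0\<^sub>m n k) c"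
  unfolding rowb_def
proof (intro allI impI)
  fix i assume "0 \<le> c" "i < dim_row (0\<^sub>m n k)"
  then have "row (0\<^sub>m n k) i = (0\<^sub>v k :: real vec)" by (intro eq_vecI) auto
  then show "vnorm (row (0\<^sub>m n k) i) \<le> c" using \<open>0 \<le> c\<close> by simp
qed

lemma opb_zero: "opb (0\<^sub>m n k) 0"
  unfolding opb_def
proof
  fix v :: "real vec" assume v: "v \<in> carrier_vec (dim_col (0\<^sub>m n k))"
  have "0\<^sub>m n k *\<^sub>v v = 0\<^sub>v n" using v by (intro eq_vecI) auto
  then show "vnorm (0\<^sub>m n k *\<^sub>v v) \<le> 0 * vnorm v" by simp
qed

lemma orth_mult:
  assumes U: "U \<in> carrier_mat n k" and S: "S \<in> carrier_mat k l"
    and oU: "orthonormal_cols U" and oS: "orthonormal_cols S"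
  shows "orthonormal_cols (U * S)"
proof -
  have "(U * S)\<^sup>T * (U * S) = S\<^sup>T * ((U\<^sup>T * U) * S)" using U S by (simp add: mtrans massoc)
  also have "\<dots> = S\<^sup>T * S" using oU oS U S unfolding orthonormal_cols_def by simp
  also have "\<dots> = 1\<^sub>m (dim_col (U * S))" using oS S unfolding orthonormal_cols_def by simp
  finally show ?thesis unfolding orthonormal_cols_def .
qed

definition dg :: "real mat \<Rightarrow> real mat" where
  "dg M = mat (dim_row M) (dim_col M) (\<lambda>(i,j). if i = j then M $$ (i,i) else 0)"

lemma incoh_nonneg:
  assumes "1 \<le> m1"
  shows "0 \<le> incoh m1 m2 r U V"
proof -
  have fin: "finite {(vnorm (row U i))\<^sup>2 | i. i < m1}" by simp
  have "(vnorm (row U 0))\<^sup>2 \<in> {(vnorm (row U i))\<^sup>2 | i. i < m1}" using assms by auto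
  then have "(vnorm (row U 0))\<^sup>2 \<le> Max {(vnorm (row U i))\<^sup>2 | i. i < m1}" using fin by (rule Max_ge[rotated])
  then have "0 \<le> Max {(vnorm (row U i))\<^sup>2 | i. i < m1}" by (meson order_trans zero_le_power2)
  then show ?thesis unfolding incoh_def by (intro max.coboundedI1) simp
qed

lemma mat_minus_zero: "dim_row A = n \<Longrightarrow> dim_col A = k \<Longrightarrow> A - 0\<^sub>m n k = (A::real mat)"
  by (intro eq_matI) auto

lemma mat_cancel: "dim_row X = dim_row Y \<Longrightarrow> dim_col X = dim_col Y \<Longrightarrow> dim_row Y = dim_row Z \<Longrightarrow> dim_col Y = dim_col Z
   \<Longrightarrow> (X + Y) - (X + Z) = Y - (Z::real mat)"
  by (intro eq_matI) auto

lemma rowb_mult': "rowb A a \<Longrightarrow> opb B b \<Longrightarrow> dim_col A = dim_row B \<Longrightarrow> 0 \<le> b \<Longrightarrow> rowb (A * B) (a * b)"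
  by (rule rowb_mult[of A "dim_row A" "dim_col A" B "dim_col B"]) auto

lemma opb_mult': "opb A a \<Longrightarrow> opb B b \<Longrightarrow> dim_col A = dim_row B \<Longrightarrow> 0 \<le> a \<Longrightarrow> opb (A * B) (a * b)"
  by (rule opb_mult[of A "dim_row A" "dim_col A" B "dim_col B"]) auto

lemma rowb_add': "rowb A a \<Longrightarrow> rowb B b \<Longrightarrow> dim_row A = dim_row B \<Longrightarrow> dim_col A = dim_col B \<Longrightarrow> rowb (A + B) (a + b)"
  by (rule rowb_add[of A "dim_row A" "dim_col A" B]) auto

lemma rowb_minus': "rowb A a \<Longrightarrow> rowb B b \<Longrightarrow> dim_row A = dim_row B \<Longrightarrow> dim_col A = dim_col B \<Longrightarrow> rowb (A - B) (a + b)"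
  by (rule rowb_minus[of A "dim_row A" "dim_col A" B]) auto

lemma opb_transpose': "opb A a \<Longrightarrow> 0 \<le> a \<Longrightarrow> opb A\<^sup>T a"
  by (rule opb_transpose[of A "dim_row A" "dim_col A"]) auto

lemma det_main:
  fixes E Us Vs Ut St Wt :: "real mat" and m1 m2 r rb i :: nat and sig :: "nat \<Rightarrow> real"
    and \<omega> C5 C3 C2 L \<mu> \<rho> :: real
  assumes r1: "1 \<le> r" and rm1: "r \<le> m1" and rbr: "rb \<le> r"
    and Usc: "Us \<in> carrier_mat m1 r" and Vsc: "Vs \<in> carrier_mat m2 r"
    and oUs: "orthonormal_cols Us" and oVs: "orthonormal_cols Vs"
    and mono: "\<forall>i j. 1 \<le> i \<and> i \<le> j \<and> j \<le> r \<longrightarrow> sig j \<le> sig i" and sr0: "0 \<le> sig r"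
    and sr1: "sig (r + 1) = 0"
    and Ec: "E \<in> carrier_mat m1 m2"
    and om: "0 \<le> \<omega>" and L0: "0 \<le> L" and mu0: "0 \<le> \<mu>"
    and C5: "1 \<le> C5" and C3: "C3 = 10 * C5" and C2: "C2 = 20 * C3 * C5"
    and rho: "\<rho> = C3 * (sqrt (real m1 * real m2) + real m1) * \<omega>\<^sup>2 * L\<^sup>2"
    and svd: "is_svd (col_block Us 0 rb * sig_block sig 0 rb + E * col_block Vs 0 rb) Ut St Wt"
    and h1: "\<forall>k::nat. real k \<le> L \<longrightarrow>
         norm_2inf ((offdiag (E * E\<^sup>T)) ^\<^sub>m k * (E * Vs))
           \<le> C3 * sqrt (\<mu> * r) * \<rho> ^ k * \<omega> * L \<and>
         norm_2inf ((offdiag (E * E\<^sup>T)) ^\<^sub>m k * Us)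
           \<le> C3 * sqrt (\<mu> * r / m1) * \<rho> ^ k"
    and h2a: "\<forall>i \<in> {1..rb}. \<bar>St $$ (i - 1, i - 1) - sig i\<bar> \<le> spec_norm (E * col_block Vs 0 rb)"
    and h2b: "spec_norm (E * col_block Vs 0 rb) \<le> spec_norm (E * Vs)"
    and h2c: "spec_norm (E * Vs) \<le> sqrt C5 * sqrt (real m1) * \<omega> * L"
    and h3: "spec_norm (Z3 Vs E) \<le> 3 * C5 * (sqrt (real m1 * real m2) + real m1) * \<omega>\<^sup>2 * L\<^sup>2"
    and h4a: "norm_2inf (col_block Us 0 rb * (col_block Us 0 rb)\<^sup>T * Ut - Ut) \<le> 4 * C5 * sqrt (\<mu> * r) * \<omega> * L / sig r"
    and h4b: "4 * C5 * sqrt (\<mu> * r) * \<omega> * L / sig r \<le> sqrt (\<mu> * r / m1)"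
    and iL: "real i \<le> L"
  shows "norm_2inf ((Z3 Vs E) ^\<^sub>m i * Us) \<le> 3 * C3 * sqrt (\<mu> * r / m1) * \<rho> ^ i \<and>
         norm_2inf ((Z3 Vs E) ^\<^sub>m i * (E * Vs)) \<le> 3 * C3 * sqrt (\<mu> * r) * \<rho> ^ i * \<omega> * L \<and>
         norm_2inf ((Z3 Vs E) ^\<^sub>m i * Ut) \<le> 4 * C3 * sqrt (\<mu> * r / m1) * \<rho> ^ i \<and>
         norm_2inf ((Z3 Vs E) ^\<^sub>m i * Z1 Us Vs sig r rb E)
           \<le> C2 * sqrt (\<mu> * r) * (sig (rb + 1) + sqrt (real m1) * \<omega> * L) * \<rho> ^ i * \<omega> * L \<and>
         norm_2inf ((Z3 Vs E) ^\<^sub>m i * Z2 Us sig r rb Ut)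
           \<le> C2 * sqrt (\<mu> * r) * \<rho> ^ i * \<omega> * sig (rb + 1) * L"
proof -
  define s where "s = (sqrt (real m1 * real m2) + real m1) * \<omega>\<^sup>2 * L\<^sup>2"
  define a where "a = real m1 * \<omega>\<^sup>2 * L\<^sup>2"
  define e0 where "e0 = sqrt C5 * sqrt (real m1) * \<omega> * L"
  define \<alpha> where "\<alpha> = C3 * sqrt (\<mu> * r / m1)"
  define \<eta> where "\<eta> = C3 * sqrt (\<mu> * r) * \<omega> * L"
  define EV where "EV = E * Vs"
  define P where "P = EV * EV\<^sup>T"
  define D where "D = dg P"
  define A where "A = offdiag (E * E\<^sup>T)"
  define Z where "Z = Z3 Vs E"
  have m1pos: "0 < real m1" using r1 rm1 by simp
  have rho_s: "\<rho> = C3 * s" unfolding rho s_def by (simp add: mult.assoc)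
  have a0: "0 \<le> a" unfolding a_def by simp
  have as: "a \<le> s" unfolding a_def s_def
    by (intro mult_right_mono) (auto intro: mult_right_mono)
  have s0: "0 \<le> s" using a0 as by linarith
  have C30: "0 \<le> C3" using C3 C5 by simp
  have sqC5: "sqrt C5 \<le> C5"
  proof -
    have "sqrt C5 * 1 \<le> sqrt C5 * sqrt C5" using C5 by (intro mult_left_mono) auto
    then show ?thesis using C5 by simp
  qed
  have sqC5_0: "1 \<le> sqrt C5" using C5 by simp
  have e00: "0 \<le> e0" unfolding e0_def using C5 om L0 by simp
  have e0sq: "e0 * e0 = C5 * a" unfolding e0_def a_def using C5 m1pos
    by (simp add: power2_eq_square real_sqrt_mult[symmetric] mult_ac)
  have al0: "0 \<le> \<alpha>" unfolding \<alpha>_def using C30 mu0 by simp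
  have et0: "0 \<le> \<eta>" unfolding \<eta>_def using C30 mu0 om L0 by simp
  have sq_mr: "sqrt (\<mu> * r) = sqrt (\<mu> * r / m1) * sqrt m1"
    using m1pos by (simp add: real_sqrt_mult[symmetric])
  have eta_alpha: "\<eta> = \<alpha> * (sqrt m1 * \<omega> * L)" unfolding \<eta>_def \<alpha>_def sq_mr by (simp add: mult_ac)
  have rho0: "0 \<le> \<rho>" using rho_s C30 s0 by simp
  have EVc: "EV \<in> carrier_mat m1 r" unfolding EV_def using Ec Vsc by simp
  have Pc: "P \<in> carrier_mat m1 m1" unfolding P_def using EVc by simp
  have Dc: "D \<in> carrier_mat m1 m1" unfolding D_def dg_def using Pc by simp
  have Ac: "A \<in> carrier_mat m1 m1" unfolding A_def offdiag_def using Ec by simp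
  have Zc: "Z \<in> carrier_mat m1 m1" unfolding Z_def Z3_def offdiag_def using Ec by simp
  have EVVE: "E * Vs * Vs\<^sup>T * E\<^sup>T = P" unfolding P_def EV_def using Ec Vsc by (simp add: mtrans massoc)
  have Zeq: "Z = A + D - P"
  proof (rule eq_matI)
    fix p q assume "p < dim_row (A + D - P)" "q < dim_col (A + D - P)"
    then have pq: "p < m1" "q < m1" using Ac Dc Pc by auto
    have "Z $$ (p,q) = (if p = q then 0 else (E * E\<^sup>T) $$ (p,q) - P $$ (p,q))"
      unfolding Z_def Z3_def EVVE offdiag_def using pq Ec Pc by simp
    moreover have "(A + D - P) $$ (p,q) = A $$ (p,q) + D $$ (p,q) - P $$ (p,q)" using pq Ac Dc Pc by simp
    moreover have "A $$ (p,q) = (if p = q then 0 else (E * E\<^sup>T) $$ (p,q))"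
      unfolding A_def offdiag_def using pq Ec by simp
    moreover have "D $$ (p,q) = (if p = q then P $$ (p,q) else 0)"
      unfolding D_def dg_def using pq Pc by simp
    ultimately show "Z $$ (p,q) = (A + D - P) $$ (p,q)" by simp
  qed (use Zc Ac Dc Pc in auto)
  have Aeq: "A = Z + P - D"
  proof (rule eq_matI)
    fix p q assume "p < dim_row (Z + P - D)" "q < dim_col (Z + P - D)"
    then have pq: "p < m1" "q < m1" using Zc Dc Pc by auto
    have "Z $$ (p,q) = (if p = q then 0 else (E * E\<^sup>T) $$ (p,q) - P $$ (p,q))"
      unfolding Z_def Z3_def EVVE offdiag_def using pq Ec Pc by simp
    moreover have "(Z + P - D) $$ (p,q) = Z $$ (p,q) + P $$ (p,q) - D $$ (p,q)" using pq Zc Dc Pc by simp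
    moreover have "A $$ (p,q) = (if p = q then 0 else (E * E\<^sup>T) $$ (p,q))"
      unfolding A_def offdiag_def using pq Ec by simp
    moreover have "D $$ (p,q) = (if p = q then P $$ (p,q) else 0)"
      unfolding D_def dg_def using pq Pc by simp
    ultimately show "A $$ (p,q) = (Z + P - D) $$ (p,q)" by simp
  qed (use Zc Ac Dc Pc in auto)
  have oEV: "opb EV e0"
  proof -
    have "spec_norm EV \<le> e0" using h2c unfolding EV_def e0_def .
    then show ?thesis using opb_spec[of EV] by (rule opb_mono[rotated])
  qed
  have oEVt: "opb EV\<^sup>T e0" using EVc oEV e00 by (rule opb_transpose)
  have oP: "opb P (e0 * e0)" unfolding P_def using EVc oEV oEVt e00 by (intro opb_mult[of _ m1 r _ m1]) auto
  have oZ: "opb Z (3 * C5 * s)"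
  proof -
    have "3 * C5 * (sqrt (real m1 * real m2) + real m1) * \<omega>\<^sup>2 * L\<^sup>2 = 3 * C5 * s"
      unfolding s_def by (simp add: mult.assoc)
    then have "spec_norm Z \<le> 3 * C5 * s" using h3 unfolding Z_def by linarith
    then show ?thesis using opb_spec[of Z] by (rule opb_mono[rotated])
  qed
  have Pdiag: "P $$ (l,l) = (vnorm (row EV l))\<^sup>2" if l: "l < m1" for l
  proof -
    have "P $$ (l,l) = row EV l \<bullet> col EV\<^sup>T l" unfolding P_def using EVc l by simp
    also have "col EV\<^sup>T l = row EV l" using EVc l by simp
    finally show ?thesis by (simp add: vnorm_sq)
  qed
  have rEV1: "vnorm (row EV l) \<le> e0" if l: "l < m1" for l
    using rowb_of_opb[OF EVc oEV e00] l EVc unfolding rowb_def by auto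
  have rEV2: "vnorm (row EV l) \<le> \<eta>" if l: "l < m1" for l
  proof -
    have "norm_2inf (offdiag (E * E\<^sup>T) ^\<^sub>m 0 * (E * Vs)) \<le> C3 * sqrt (\<mu> * r) * \<rho> ^ 0 * \<omega> * L"
      using spec[OF h1, of 0] L0 by simp
    moreover have "offdiag (E * E\<^sup>T) ^\<^sub>m 0 * (E * Vs) = EV" using Ac EVc unfolding A_def EV_def
      by (simp add: left_mult_one_mat[of _ m1 r])
    ultimately have "norm_2inf EV \<le> \<eta>" unfolding \<eta>_def by simp
    then show ?thesis using rowb_n2i[of EV] l EVc unfolding rowb_def by force
  qed
  have Doff: "D $$ (p,q) = 0" if "p < m1" "q < m1" "p \<noteq> q" for p q
    using that unfolding D_def dg_def using Pc by simp
  have Ddiag: "\<bar>D $$ (p,p)\<bar> = (vnorm (row EV p))\<^sup>2" if p: "p < m1" for p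
    unfolding D_def dg_def using Pc p Pdiag by simp
  have oD1: "opb D (e0 * e0)"
  proof (rule opb_diag[OF Dc Doff])
    fix p assume p: "p < m1"
    have "(vnorm (row EV p))\<^sup>2 \<le> e0 * e0" unfolding power2_eq_square
      by (rule mult_mono) (use rEV1[OF p] vnorm_nonneg[of "row EV p"] e00 in auto)
    then show "\<bar>D $$ (p,p)\<bar> \<le> e0 * e0" using Ddiag[OF p] by simp
  qed
  have oD2: "opb D (\<eta> * e0)"
  proof (rule opb_diag[OF Dc Doff])
    fix p assume p: "p < m1"
    have "(vnorm (row EV p))\<^sup>2 \<le> \<eta> * e0" unfolding power2_eq_square
      by (rule mult_mono) (use rEV1[OF p] rEV2[OF p] vnorm_nonneg[of "row EV p"] et0 in auto)
    then show "\<bar>D $$ (p,p)\<bar> \<le> \<eta> * e0" using Ddiag[OF p] by simp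
  qed
  have oA: "opb A (5 * C5 * s)"
  proof -
    have "opb (Z + P - D) (3 * C5 * s + e0 * e0 + e0 * e0)"
      using Zc Pc Dc oZ oP oD1 by (intro opb_minus[of _ m1 m1] opb_add[of _ m1 m1]) auto
    moreover have "C5 * a \<le> C5 * s" using as C5 by (intro mult_left_mono) auto
    then have "3 * C5 * s + e0 * e0 + e0 * e0 \<le> 5 * C5 * s" using e0sq by linarith
    ultimately show ?thesis using Aeq opb_mono by auto
  qed
  have ete0: "\<eta> * e0 = \<alpha> * sqrt C5 * a"
  proof -
    have "\<eta> * e0 = \<alpha> * sqrt C5 * (sqrt m1 * sqrt m1) * (\<omega> * \<omega>) * (L * L)"
      unfolding eta_alpha e0_def by (simp add: mult_ac)
    also have "sqrt m1 * sqrt m1 = real m1" by simp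
    finally show ?thesis unfolding a_def by (simp add: power2_eq_square mult_ac)
  qed
  have ete0': "\<eta> * e0 * 1 \<le> \<alpha> * C5 * a"
  proof -
    have "\<alpha> * sqrt C5 * a \<le> \<alpha> * C5 * a" using sqC5 al0 a0 by (intro mult_right_mono mult_left_mono) auto
    then show ?thesis using ete0 by simp
  qed
  have oUs1: "opb Us 1" using Usc oUs by (rule opb_orth)
  have pow_eq: "x * s^(0+i) * C3^(0+i) * (2 - 1/2^i) \<le> 2 * x * \<rho> ^ i" if x: "0 \<le> x" for x
  proof -
    have e: "x * s^(0+i) * C3^(0+i) * (2 - 1/2^i) = (x * \<rho> ^ i) * (2 - 1/2^i)"
      using rho_s by (simp add: power_mult_distrib mult_ac)
    have "(x * \<rho> ^ i) * (2 - 1/2^i) \<le> (x * \<rho> ^ i) * 2" by (rule mult_left_mono) (use x rho0 in auto)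
    also have "\<dots> = 2 * x * \<rho> ^ i" by simp
    finally show ?thesis unfolding e .
  qed
  have hEV: "rowb (A ^\<^sub>m j * EV) (\<eta> * (C3 * s) ^ j)" if "real j \<le> L" for j
  proof -
    have "norm_2inf (A ^\<^sub>m j * EV) \<le> \<eta> * (C3 * s) ^ j"
      using spec[OF h1, of j] that rho_s unfolding A_def \<eta>_def EV_def by (simp add: mult_ac)
    then show ?thesis using rowb_n2i by (rule rowb_mono[rotated])
  qed
  have ZeqY: "Z = A + D - EV * EV\<^sup>T" using Zeq unfolding P_def .
  have ZU: "rowb (Z ^\<^sub>m i * Us) (2 * \<alpha> * \<rho> ^ i)"
  proof -
    have "rowb (A ^\<^sub>m 0 * (Z ^\<^sub>m i * Us)) (\<alpha> * s^(0+i) * C3^(0+i) * (2 - 1/2^i))"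
    proof (rule core[OF Ac Zc Dc EVc Usc ZeqY C5 C3 a0 as al0 oZ oA oD2 oEV oUs1])
      show "0 \<le> \<eta> * e0" "0 \<le> e0" "(0::real) \<le> 1" "0 \<le> \<eta>" using et0 e00 by auto
      show "rowb (A ^\<^sub>m j * Us) (\<alpha> * (C3 * s) ^ j)" if "real j \<le> L" for j
      proof -
        have "norm_2inf (A ^\<^sub>m j * Us) \<le> \<alpha> * (C3 * s) ^ j"
          using spec[OF h1, of j] that rho_s unfolding A_def \<alpha>_def by simp
        then show ?thesis using rowb_n2i by (rule rowb_mono[rotated])
      qed
      show "rowb (A ^\<^sub>m j * EV) (\<eta> * (C3 * s) ^ j)" if "real j \<le> L" for j using hEV that .
      show "\<eta> * e0 * 1 \<le> \<alpha> * C5 * a" by (rule ete0')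
      show "\<eta> * e0 * 1 \<le> \<alpha> * C5 * a" by (rule ete0')
      show "real (0 + i) \<le> L" using iL by simp
    qed
    moreover have "A ^\<^sub>m 0 * (Z ^\<^sub>m i * Us) = Z ^\<^sub>m i * Us" using Ac Zc Usc by simp
    ultimately have "rowb (Z ^\<^sub>m i * Us) (\<alpha> * s^(0+i) * C3^(0+i) * (2 - 1/2^i))" by simp
    then show ?thesis using pow_eq[OF al0] by (rule rowb_mono)
  qed
  have ZE: "rowb (Z ^\<^sub>m i * EV) (2 * \<eta> * \<rho> ^ i)"
  proof -
    have "rowb (A ^\<^sub>m 0 * (Z ^\<^sub>m i * EV)) (\<eta> * s^(0+i) * C3^(0+i) * (2 - 1/2^i))"
    proof (rule core[OF Ac Zc Dc EVc EVc ZeqY C5 C3 a0 as et0 oZ oA oD2 oEV oEV])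
      show "0 \<le> \<eta> * e0" "0 \<le> e0" "0 \<le> e0" "0 \<le> \<eta>" using et0 e00 by auto
      show "rowb (A ^\<^sub>m j * EV) (\<eta> * (C3 * s) ^ j)" if "real j \<le> L" for j using hEV that .
      show "\<eta> * e0 * e0 \<le> \<eta> * C5 * a" using e0sq by (simp add: mult.assoc)
      show "rowb (A ^\<^sub>m j * EV) (\<eta> * (C3 * s) ^ j)" if "real j \<le> L" for j using hEV that .
      show "\<eta> * e0 * e0 \<le> \<eta> * C5 * a" using e0sq by (simp add: mult.assoc)
      show "real (0 + i) \<le> L" using iL by simp
    qed
    moreover have "A ^\<^sub>m 0 * (Z ^\<^sub>m i * EV) = Z ^\<^sub>m i * EV" using Ac Zc EVc by simp
    ultimately have "rowb (Z ^\<^sub>m i * EV) (\<eta> * s^(0+i) * C3^(0+i) * (2 - 1/2^i))" by simp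
    then show ?thesis using pow_eq[OF et0] by (rule rowb_mono)
  qed
  have Zic: "Z ^\<^sub>m i \<in> carrier_mat m1 m1" using Zc by simp
  have concl1: "norm_2inf ((Z3 Vs E) ^\<^sub>m i * Us) \<le> 3 * C3 * sqrt (\<mu> * r / m1) * \<rho> ^ i"
  proof -
    have "norm_2inf (Z ^\<^sub>m i * Us) \<le> 2 * \<alpha> * \<rho> ^ i" using ZU al0 rho0 by (intro n2i_le) auto
    also have "\<dots> \<le> 3 * \<alpha> * \<rho> ^ i" using al0 rho0 by (intro mult_right_mono) auto
    finally show ?thesis unfolding Z_def \<alpha>_def by (simp add: mult_ac)
  qed
  have concl2: "norm_2inf ((Z3 Vs E) ^\<^sub>m i * (E * Vs)) \<le> 3 * C3 * sqrt (\<mu> * r) * \<rho> ^ i * \<omega> * L"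
  proof -
    have "norm_2inf (Z ^\<^sub>m i * EV) \<le> 2 * \<eta> * \<rho> ^ i" using ZE et0 rho0 by (intro n2i_le) auto
    also have "\<dots> \<le> 3 * \<eta> * \<rho> ^ i" using et0 rho0 by (intro mult_right_mono) auto
    finally show ?thesis unfolding Z_def \<eta>_def EV_def by (simp add: mult_ac)
  qed
  define sel1 where "sel1 = sel 0 rb r"
  define sel2 where "sel2 = sel rb r r"
  define U1 where "U1 = col_block Us 0 rb"
  define V1 where "V1 = col_block Vs 0 rb"
  define U2 where "U2 = col_block Us rb r"
  define V2 where "V2 = col_block Vs rb r"
  define S1 where "S1 = sig_block sig 0 rb"
  define S2 where "S2 = sig_block sig rb r"
  define EV1 where "EV1 = E * V1"
  define EV2 where "EV2 = E * V2"
  have sel1c: "sel1 \<in> carrier_mat r rb" unfolding sel1_def using sel_carrier[of 0 rb r] by simp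
  have sel2c: "sel2 \<in> carrier_mat r (r - rb)" unfolding sel2_def by simp
  have U1s: "U1 = Us * sel1" unfolding U1_def sel1_def using Usc rbr by (rule col_block_sel)
  have V1s: "V1 = Vs * sel1" unfolding V1_def sel1_def using Vsc rbr by (rule col_block_sel)
  have U2s: "U2 = Us * sel2" unfolding U2_def sel2_def using Usc by (rule col_block_sel) simp
  have V2s: "V2 = Vs * sel2" unfolding V2_def sel2_def using Vsc by (rule col_block_sel) simp
  have U1c: "U1 \<in> carrier_mat m1 rb" using U1s Usc sel1c by simp
  have U2c: "U2 \<in> carrier_mat m1 (r - rb)" using U2s Usc sel2c by simp
  have V1c: "V1 \<in> carrier_mat m2 rb" using V1s Vsc sel1c by simp
  have S1c: "S1 \<in> carrier_mat rb rb" unfolding S1_def sig_block_def by simp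
  have S2c: "S2 \<in> carrier_mat (r - rb) (r - rb)" unfolding S2_def sig_block_def by simp
  have osel1: "orthonormal_cols sel1" unfolding sel1_def using rbr by (intro sel_orth) auto
  have osel2: "orthonormal_cols sel2" unfolding sel2_def using rbr by (intro sel_orth) auto
  have opsel1: "opb sel1 1" using sel1c osel1 by (rule opb_orth)
  have opsel2: "opb sel2 1" using sel2c osel2 by (rule opb_orth)
  have oU1: "orthonormal_cols U1" unfolding U1s using Usc sel1c oUs osel1 by (rule orth_mult)
  have oU2: "orthonormal_cols U2" unfolding U2s using Usc sel2c oUs osel2 by (rule orth_mult)
  have opU1: "opb U1 1" using U1c oU1 by (rule opb_orth)
  have opU2: "opb U2 1" using U2c oU2 by (rule opb_orth)
  have opU1t: "opb U1\<^sup>T 1" using U1c opU1 by (intro opb_transpose) auto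
  have opU2t: "opb U2\<^sup>T 1" using U2c opU2 by (intro opb_transpose) auto
  have EV1s: "EV1 = EV * sel1" unfolding EV1_def EV_def V1s using Ec Vsc sel1c by (simp add: massoc)
  have EV2s: "EV2 = EV * sel2" unfolding EV2_def EV_def V2s using Ec Vsc sel2c by (simp add: massoc)
  have EV1c: "EV1 \<in> carrier_mat m1 rb" using EV1s EVc sel1c by simp
  have EV2c: "EV2 \<in> carrier_mat m1 (r - rb)" using EV2s EVc sel2c by simp
  have opEV1: "opb EV1 e0" unfolding EV1s using EVc sel1c oEV opsel1 e00
    by (metis mult.right_neutral opb_mult)
  have opEV2: "opb EV2 e0" unfolding EV2s using EVc sel2c oEV opsel2 e00
    by (metis mult.right_neutral opb_mult)
  have U2tU1: "U2\<^sup>T * U1 = 0\<^sub>m (r - rb) rb"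
  proof -
    have "U2\<^sup>T * U1 = sel2\<^sup>T * ((Us\<^sup>T * Us) * sel1)" unfolding U2s U1s using Usc sel1c sel2c
      by (simp add: mtrans massoc)
    also have "\<dots> = sel2\<^sup>T * sel1" using oUs Usc sel1c unfolding orthonormal_cols_def by simp
    also have "\<dots> = 0\<^sub>m (r - rb) rb" unfolding sel1_def sel2_def using rbr by (rule sel_disj)
    finally show ?thesis .
  qed
  define M where "M = U1 * S1 + EV1"
  have svd': "is_svd M Ut St Wt" using svd unfolding M_def U1_def S1_def EV1_def V1_def .
  have Mc: "M \<in> carrier_mat m1 rb" unfolding M_def using U1c S1c EV1c by simp
  have Utc: "Ut \<in> carrier_mat m1 rb" and Stc: "St \<in> carrier_mat rb rb" and Wtc: "Wt \<in> carrier_mat rb rb"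
    and oUt: "orthonormal_cols Ut" and oWt: "orthonormal_cols Wt"
    and Stoff: "\<And>p q. p < rb \<Longrightarrow> q < rb \<Longrightarrow> p \<noteq> q \<Longrightarrow> St $$ (p,q) = 0"
    and Meq: "M = Ut * St * Wt\<^sup>T"
    using svd' Mc unfolding is_svd_def by auto
  note dims = carrier_matD[OF Usc] carrier_matD[OF Vsc] carrier_matD[OF Ec] carrier_matD[OF EVc]
    carrier_matD[OF Zc] carrier_matD[OF Zic] carrier_matD[OF sel1c] carrier_matD[OF sel2c]
    carrier_matD[OF U1c] carrier_matD[OF U2c] carrier_matD[OF V1c] carrier_matD[OF S1c] carrier_matD[OF S2c]
    carrier_matD[OF EV1c] carrier_matD[OF EV2c] carrier_matD[OF Utc] carrier_matD[OF Stc] carrier_matD[OF Wtc]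
  define Q where "Q = U1\<^sup>T * Ut"
  define W where "W = Ut - U1 * Q"
  have Qc: "Q \<in> carrier_mat rb rb" unfolding Q_def using U1c Utc by simp
  have Wc: "W \<in> carrier_mat m1 rb" unfolding W_def using U1c Utc Qc by (simp add: minus_carrier_mat)
  have opUt: "opb Ut 1" using Utc oUt by (rule opb_orth)
  have opQ: "opb Q 1" unfolding Q_def using U1c Utc opU1t opUt by (metis mult_1 opb_mult transpose_carrier_mat zero_le_one)
  have Ut_split: "Ut = U1 * Q + W"
  proof (rule eq_matI)
    fix p q assume "p < dim_row (U1 * Q + W)" "q < dim_col (U1 * Q + W)"
    then have pq: "p < m1" "q < rb" using Wc by auto
    show "Ut $$ (p,q) = (U1 * Q + W) $$ (p,q)" unfolding W_def using pq U1c Qc Utc by simp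
  qed (use Utc Wc in auto)
  have U2tUt: "U2\<^sup>T * Ut = U2\<^sup>T * W"
  proof -
    have "U2\<^sup>T * Ut = U2\<^sup>T * (U1 * Q) + U2\<^sup>T * W" using Ut_split U2c U1c Qc Wc
      by (metis mdistL carrier_matD index_mult_mat(2,3) index_transpose_mat(3))
    also have "U2\<^sup>T * (U1 * Q) = (U2\<^sup>T * U1) * Q" using U2c U1c Qc by (simp add: massoc)
    also have "\<dots> = 0\<^sub>m (r - rb) rb" using U2tU1 Qc by simp
    finally show ?thesis using U2c Wc by simp
  qed
  have UUQ: "U1 * U1\<^sup>T * Ut = U1 * Q" unfolding Q_def by (simp add: massoc dims)
  have K: "\<exists>g\<ge>0. rowb (Z ^\<^sub>m i * W) (2 * \<alpha> * \<rho> ^ i) \<and> opb (U2\<^sup>T * W) g \<and> sig (rb + 1) * g \<le> 2 * e0"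
  proof (cases "4 * C5 * sqrt (\<mu> * r) * \<omega> * L / sig r \<le> 0")
    case True
    then have "norm_2inf (U1 * U1\<^sup>T * Ut - Ut) \<le> 0" using h4a unfolding U1_def by linarith
    then have X0: "U1 * Q - Ut = 0\<^sub>m m1 rb" using n2i_zero unfolding UUQ by (metis dims(31,32) index_minus_mat(2,3))
    have W0: "W = 0\<^sub>m m1 rb"
    proof (rule eq_matI)
      fix p q assume "p < dim_row (0\<^sub>m m1 rb)" "q < dim_col (0\<^sub>m m1 rb)"
      then have pq: "p < m1" "q < rb" by auto
      have "(U1 * Q - Ut) $$ (p,q) = 0" using X0 pq by simp
      then show "W $$ (p,q) = 0\<^sub>m m1 rb $$ (p,q)" unfolding W_def using pq Qc by (simp add: dims)
    qed (use Wc in auto)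
    have "rowb (Z ^\<^sub>m i * W) (2 * \<alpha> * \<rho> ^ i)" unfolding W0 using al0 rho0
      by (simp add: dims rowb_zero)
    moreover have "opb (U2\<^sup>T * W) 0" unfolding W0 by (simp add: dims opb_zero)
    ultimately show ?thesis using e00 by auto
  next
    case False
    define w where "w = sqrt m1 * \<omega> * L"
    have w0: "0 \<le> w" unfolding w_def using om L0 by simp
    have e0w: "e0 = sqrt C5 * w" unfolding e0_def w_def by (simp add: mult_ac)
    have etaw: "\<eta> = \<alpha> * w" unfolding eta_alpha w_def by simp
    have num0: "0 \<le> 4 * C5 * sqrt (\<mu> * r) * \<omega> * L" using C5 mu0 om L0 by simp
    have sigr: "0 < sig r"
    proof (rule ccontr)
      assume "\<not> 0 < sig r"
      then have "sig r = 0" using sr0 by simp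
      then show False using False by simp
    qed
    have num: "0 < 4 * C5 * sqrt (\<mu> * r) * \<omega> * L"
    proof -
      have "0 < 4 * C5 * sqrt (\<mu> * r) * \<omega> * L / sig r" using False by simp
      then show ?thesis using sigr by (simp add: zero_less_divide_iff)
    qed
    have sqmr: "0 < sqrt (\<mu> * r)"
    proof -
      have "sqrt (\<mu> * r) \<noteq> 0" using num r1 by auto
      moreover have "0 \<le> sqrt (\<mu> * r)" using mu0 by simp
      ultimately show ?thesis by linarith
    qed
    have key1: "4 * C5 * w \<le> sig r"
    proof -
      have h: "4 * C5 * sqrt (\<mu> * r) * \<omega> * L \<le> sqrt (\<mu> * r / m1) * sig r"
        using h4b sigr by (simp add: divide_le_eq)
      have A1: "(4 * C5 * sqrt (\<mu> * r) * \<omega> * L) * sqrt m1 \<le> (sqrt (\<mu> * r / m1) * sig r) * sqrt m1"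
        by (rule mult_right_mono[OF h]) simp
      have A2: "(4 * C5 * sqrt (\<mu> * r) * \<omega> * L) * sqrt m1 = sqrt (\<mu> * r) * (4 * C5 * w)"
        unfolding w_def by (simp add: mult_ac)
      have A3: "(sqrt (\<mu> * r / m1) * sig r) * sqrt m1 = sqrt (\<mu> * r) * sig r"
        unfolding sq_mr by (simp add: mult_ac)
      have "sqrt (\<mu> * r) * (4 * C5 * w) \<le> sqrt (\<mu> * r) * sig r" using A1 A2 A3 by simp
      then show ?thesis using sqmr by simp
    qed
    define \<sigma> where "\<sigma> = max (sig r) (sig (rb + 1))"
    define \<delta> where "\<delta> = \<sigma> - e0"
    have e0s: "4 * e0 \<le> sig r"
    proof -
      have "e0 \<le> C5 * w" unfolding e0w using sqC5 w0 by (rule mult_right_mono)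
      then show ?thesis using key1 by linarith
    qed
    have sgs: "sig r \<le> \<sigma>" "sig (rb + 1) \<le> \<sigma>" unfolding \<sigma>_def by auto
    have dpos: "0 < \<delta>" unfolding \<delta>_def using e0s sgs sigr e00 by linarith
    have "4 * \<delta> = 4 * \<sigma> - 4 * e0" unfolding \<delta>_def by simp
    then have d34: "3 * \<sigma> \<le> 4 * \<delta>" using e0s sgs sigr e00 by linarith
    have dw: "(1 + sqrt C5) * w \<le> \<delta>"
    proof -
      have "(1 + sqrt C5) * w + sqrt C5 * w \<le> 4 * C5 * w"
      proof -
        have "(1 + sqrt C5) * w + sqrt C5 * w = (1 + 2 * sqrt C5) * w" by (simp add: algebra_simps)
        also have "\<dots> \<le> 4 * C5 * w" using sqC5 C5 w0 by (intro mult_right_mono) auto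
        finally show ?thesis .
      qed
      then show ?thesis unfolding \<delta>_def using key1 sgs e0w by linarith
    qed
    have Stdiag: "\<delta> \<le> St $$ (k,k)" if k: "k < rb" for k
    proof -
      have "\<bar>St $$ (Suc k - 1, Suc k - 1) - sig (Suc k)\<bar> \<le> spec_norm (E * col_block Vs 0 rb)"
        using bspec[OF h2a, of "Suc k"] k by simp
      then have "sig (Suc k) - St $$ (k,k) \<le> e0" using h2b h2c unfolding e0_def by auto
      moreover have "sig r \<le> sig (Suc k)" using mono k rbr by auto
      moreover have "sig (rb + 1) \<le> sig (Suc k)"
      proof (cases "rb + 1 \<le> r")
        case True then show ?thesis using mono k by auto
      next
        case False then have "rb = r" using rbr by simp
        then show ?thesis using sr1 sr0 \<open>sig r \<le> sig (Suc k)\<close> by simp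
      qed
      ultimately show ?thesis unfolding \<delta>_def \<sigma>_def by simp
    qed
    define Dinv where "Dinv = mat rb rb (\<lambda>(p,q). if p = q then 1 / St $$ (p,p) else 0)"
    have Dinvc: "Dinv \<in> carrier_mat rb rb" unfolding Dinv_def by simp
    have opDinv: "opb Dinv (1 / \<delta>)"
    proof (rule opb_diag[OF Dinvc])
      fix p q assume "p < rb" "q < rb" "p \<noteq> q" then show "Dinv $$ (p,q) = 0" unfolding Dinv_def by simp
    next
      fix p assume p: "p < rb"
      have "\<delta> \<le> St $$ (p,p)" using Stdiag p .
      then have "\<bar>1 / St $$ (p,p)\<bar> \<le> 1 / \<delta>" using dpos by (simp add: frac_le)
      then show "\<bar>Dinv $$ (p,p)\<bar> \<le> 1 / \<delta>" unfolding Dinv_def using p by simp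
    qed
    have StD: "St * Dinv = 1\<^sub>m rb"
    proof (rule eq_matI)
      fix p q assume "p < dim_row (1\<^sub>m rb)" "q < dim_col (1\<^sub>m rb)"
      then have pq: "p < rb" "q < rb" by auto
      have nz: "St $$ (q,q) \<noteq> 0" using Stdiag[OF pq(2)] dpos by simp
      have "(St * Dinv) $$ (p,q) = (\<Sum>k\<in>{0..<rb}. St $$ (p,k) * (if k = q then 1 / St $$ (k,k) else 0))"
        unfolding Dinv_def using pq Stc by (simp add: scalar_prod_def)
      also have "\<dots> = (\<Sum>k\<in>{0..<rb}. if k = q then St $$ (p,q) / St $$ (q,q) else 0)"
        by (intro sum.cong) auto
      also have "\<dots> = St $$ (p,q) / St $$ (q,q)" using pq by simp
      also have "\<dots> = 1\<^sub>m rb $$ (p,q)" using pq nz Stoff[of p q] by auto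
      finally show "(St * Dinv) $$ (p,q) = 1\<^sub>m rb $$ (p,q)" .
    qed (use Stc Dinvc in auto)
    define G where "G = Wt * Dinv"
    have Gc: "G \<in> carrier_mat rb rb" unfolding G_def using Wtc Dinvc by simp
    have opWt: "opb Wt 1" using Wtc oWt by (rule opb_orth)
    have opG: "opb G (1 / \<delta>)" unfolding G_def using opb_mult'[OF opWt opDinv] Wtc Dinvc by simp
    note dims2 = carrier_matD[OF Qc] carrier_matD[OF Wc] carrier_matD[OF Gc] carrier_matD[OF Dinvc] carrier_matD[OF Mc]
    have MWt: "M * Wt = Ut * St"
    proof -
      have "M * Wt = (Ut * St) * (Wt\<^sup>T * Wt)" unfolding Meq by (simp add: massoc dims)
      also have "Wt\<^sup>T * Wt = 1\<^sub>m rb" using oWt Wtc unfolding orthonormal_cols_def by simp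
      finally show ?thesis by (simp add: dims)
    qed
    have UtSt: "Ut * St = U1 * (S1 * Wt) + EV1 * Wt"
    proof -
      have "Ut * St = M * Wt" using MWt by simp
      also have "\<dots> = U1 * (S1 * Wt) + EV1 * Wt" unfolding M_def by (simp add: mdistR massoc dims dims2)
      finally show ?thesis .
    qed
    have QSt: "Q * St = S1 * Wt + U1\<^sup>T * (EV1 * Wt)"
    proof -
      have "Q * St = U1\<^sup>T * (Ut * St)" unfolding Q_def by (simp add: massoc dims)
      also have "\<dots> = U1\<^sup>T * (U1 * (S1 * Wt)) + U1\<^sup>T * (EV1 * Wt)" unfolding UtSt by (simp add: mdistL dims)
      also have "U1\<^sup>T * (U1 * (S1 * Wt)) = (U1\<^sup>T * U1) * (S1 * Wt)" by (simp add: massoc dims)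
      also have "U1\<^sup>T * U1 = 1\<^sub>m rb" using oU1 U1c unfolding orthonormal_cols_def by simp
      finally show ?thesis by (simp add: dims)
    qed
    have WSt: "W * St = EV1 * Wt - U1 * (U1\<^sup>T * (EV1 * Wt))"
    proof -
      have "W * St = Ut * St - U1 * (Q * St)" unfolding W_def by (simp add: mdistR_minus massoc dims dims2)
      also have "\<dots> = (U1 * (S1 * Wt) + EV1 * Wt) - (U1 * (S1 * Wt) + U1 * (U1\<^sup>T * (EV1 * Wt)))"
        unfolding UtSt QSt by (simp add: mdistL dims)
      also have "\<dots> = EV1 * Wt - U1 * (U1\<^sup>T * (EV1 * Wt))" by (rule mat_cancel) (simp_all add: dims)
      finally show ?thesis .
    qed
    have Weq: "W = EV1 * G - U1 * (U1\<^sup>T * (EV1 * G))"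
    proof -
      have "W = W * (St * Dinv)" unfolding StD by (simp add: dims2)
      also have "\<dots> = (W * St) * Dinv" by (simp add: massoc dims dims2)
      also have "\<dots> = EV1 * G - U1 * (U1\<^sup>T * (EV1 * G))" unfolding WSt G_def
        by (simp add: mdistR_minus massoc dims dims2)
      finally show ?thesis .
    qed
    have ZWeq: "Z ^\<^sub>m i * W = (Z ^\<^sub>m i * EV) * (sel1 * G) - (Z ^\<^sub>m i * Us) * (sel1 * (U1\<^sup>T * (EV1 * G)))"
      unfolding Weq unfolding EV1s U1s by (simp add: mdistL_minus massoc dims dims2)
    have b1: "rowb ((Z ^\<^sub>m i * EV) * (sel1 * G)) (2 * \<eta> * \<rho> ^ i * (1 * (1 / \<delta>)))"
      using dpos by (intro rowb_mult'[OF ZE] opb_mult'[OF opsel1 opG]) (simp_all add: dims dims2)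
    have b2: "rowb ((Z ^\<^sub>m i * Us) * (sel1 * (U1\<^sup>T * (EV1 * G)))) (2 * \<alpha> * \<rho> ^ i * (1 * (1 * (e0 * (1 / \<delta>)))))"
      using dpos e00 by (intro rowb_mult'[OF ZU] opb_mult'[OF opsel1] opb_mult'[OF opU1t] opb_mult'[OF opEV1 opG])
         (simp_all add: dims dims2)
    have "rowb (Z ^\<^sub>m i * W) (2 * \<eta> * \<rho> ^ i * (1 * (1 / \<delta>)) + 2 * \<alpha> * \<rho> ^ i * (1 * (1 * (e0 * (1 / \<delta>)))))"
      unfolding ZWeq using b1 b2 by (rule rowb_minus') (simp_all add: dims dims2)
    moreover have "2 * \<eta> * \<rho> ^ i * (1 * (1 / \<delta>)) + 2 * \<alpha> * \<rho> ^ i * (1 * (1 * (e0 * (1 / \<delta>)))) \<le> 2 * \<alpha> * \<rho> ^ i"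
    proof -
      have eq: "2 * \<eta> * \<rho> ^ i * (1 * (1 / \<delta>)) + 2 * \<alpha> * \<rho> ^ i * (1 * (1 * (e0 * (1 / \<delta>))))
          = (2 * \<alpha> * \<rho> ^ i) * ((1 + sqrt C5) * w / \<delta>)"
        unfolding etaw e0w using dpos by (simp add: field_simps)
      have "(1 + sqrt C5) * w / \<delta> \<le> 1" using dw dpos by simp
      moreover have "0 \<le> 2 * \<alpha> * \<rho> ^ i" using al0 rho0 by simp
      ultimately have "(2 * \<alpha> * \<rho> ^ i) * ((1 + sqrt C5) * w / \<delta>) \<le> 2 * \<alpha> * \<rho> ^ i"
        by (rule mult_left_le)
      then show ?thesis unfolding eq .
    qed
    ultimately have R: "rowb (Z ^\<^sub>m i * W) (2 * \<alpha> * \<rho> ^ i)" by (rule rowb_mono)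
    have U2W: "U2\<^sup>T * W = U2\<^sup>T * (EV1 * G)"
    proof -
      have "U2\<^sup>T * W = U2\<^sup>T * (EV1 * G) - (U2\<^sup>T * U1) * (U1\<^sup>T * (EV1 * G))"
        unfolding Weq by (simp add: mdistL_minus massoc dims dims2)
      also have "(U2\<^sup>T * U1) * (U1\<^sup>T * (EV1 * G)) = 0\<^sub>m (r - rb) rb" unfolding U2tU1 by (simp add: dims dims2)
      finally show ?thesis by (simp add: dims dims2 mat_minus_zero)
    qed
    have "opb (U2\<^sup>T * W) (1 * (e0 * (1 / \<delta>)))" unfolding U2W
      using e00 by (intro opb_mult'[OF opU2t] opb_mult'[OF opEV1 opG]) (simp_all add: dims dims2)
    moreover have "sig (rb + 1) * (1 * (e0 * (1 / \<delta>))) \<le> 2 * e0"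
    proof -
      have ed: "0 \<le> e0 / \<delta>" using e00 dpos by simp
      have "sig (rb + 1) * (e0 / \<delta>) \<le> \<sigma> * (e0 / \<delta>)" by (rule mult_right_mono) (use sgs ed in auto)
      also have "\<dots> \<le> (4 / 3 * \<delta>) * (e0 / \<delta>)" by (rule mult_right_mono) (use d34 ed in auto)
      also have "\<dots> = 4 / 3 * e0" using dpos by simp
      finally have f: "sig (rb + 1) * (e0 / \<delta>) \<le> 4 / 3 * e0" .
      have "sig (rb + 1) * (1 * (e0 * (1 / \<delta>))) = sig (rb + 1) * (e0 / \<delta>)" by simp
      then show ?thesis using f e00 by linarith
    qed
    moreover have "0 \<le> 1 * (e0 * (1 / \<delta>))" using e00 dpos by simp
    ultimately show ?thesis using R by blast
  qed
  then obtain g where g0: "0 \<le> g" and ZW: "rowb (Z ^\<^sub>m i * W) (2 * \<alpha> * \<rho> ^ i)"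
    and opG: "opb (U2\<^sup>T * W) g" and sgI: "sig (rb + 1) * g \<le> 2 * e0" by blast
  have ZUt: "rowb (Z ^\<^sub>m i * Ut) (4 * \<alpha> * \<rho> ^ i)"
  proof -
    have eq: "Z ^\<^sub>m i * Ut = (Z ^\<^sub>m i * Us) * (sel1 * Q) + Z ^\<^sub>m i * W"
      unfolding Ut_split U1s using Qc Wc by (simp add: mdistL massoc dims carrier_matD[OF Qc] carrier_matD[OF Wc])
    have "opb (sel1 * Q) (1 * 1)" using sel1c Qc opsel1 opQ by (intro opb_mult[of _ r rb _ rb]) auto
    then have "rowb ((Z ^\<^sub>m i * Us) * (sel1 * Q)) (2 * \<alpha> * \<rho> ^ i * (1 * 1))"
      by (rule rowb_mult'[OF ZU]) (simp_all add: dims)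
    then have "rowb (Z ^\<^sub>m i * Ut) (2 * \<alpha> * \<rho> ^ i * (1 * 1) + 2 * \<alpha> * \<rho> ^ i)"
      unfolding eq using ZW by (rule rowb_add') (simp_all add: dims carrier_matD[OF Qc] carrier_matD[OF Wc])
    then show ?thesis by (simp add: mult.assoc)
  qed
  have concl3: "norm_2inf ((Z3 Vs E) ^\<^sub>m i * Ut) \<le> 4 * C3 * sqrt (\<mu> * r / m1) * \<rho> ^ i"
  proof -
    have "norm_2inf (Z ^\<^sub>m i * Ut) \<le> 4 * \<alpha> * \<rho> ^ i" using ZUt al0 rho0 by (intro n2i_le) auto
    then show ?thesis unfolding Z_def \<alpha>_def by (simp add: mult_ac)
  qed
  define sg where "sg = sig (rb + 1)"
  define ww where "ww = sqrt m1 * \<omega> * L"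
  have ww0: "0 \<le> ww" unfolding ww_def using om L0 by simp
  have sg0: "0 \<le> sg"
  proof (cases "rb + 1 \<le> r")
    case True
    have "sig r \<le> sig (rb + 1)" using spec[OF spec[OF mono, of "rb + 1"], of r] True by simp
    then show ?thesis unfolding sg_def using sr0 by simp
  next
    case False then have "rb = r" using rbr by simp
    then show ?thesis unfolding sg_def using sr1 by simp
  qed
  have opS2: "opb S2 sg"
  proof (rule opb_diag[OF S2c])
    fix p q assume "p < r - rb" "q < r - rb" "p \<noteq> q" then show "S2 $$ (p,q) = 0" unfolding S2_def sig_block_def by simp
  next
    fix p assume p: "p < r - rb"
    have "S2 $$ (p,p) = sig (p + rb + 1)" unfolding S2_def sig_block_def using p by simp
    moreover have "sig r \<le> sig (p + rb + 1)" using spec[OF spec[OF mono, of "p + rb + 1"], of r] p by simp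
    moreover have "sig (p + rb + 1) \<le> sg" unfolding sg_def
      using spec[OF spec[OF mono, of "rb + 1"], of "p + rb + 1"] p by simp
    ultimately show "\<bar>S2 $$ (p,p)\<bar> \<le> sg" using sr0 by simp
  qed
  have opEV2t: "opb EV2\<^sup>T e0" using opEV2 e00 by (rule opb_transpose')
  note dims3 = carrier_matD[OF Qc] carrier_matD[OF Wc]
  have Z1eq: "Z1 Us Vs sig r rb E = U2 * S2 * V2\<^sup>T * E\<^sup>T + E * V2 * S2 * U2\<^sup>T + E * V2 * V2\<^sup>T * E\<^sup>T"
    unfolding Z1_def Let_def U2_def V2_def S2_def ..
  have t1: "U2 * S2 * V2\<^sup>T * E\<^sup>T = Us * (sel2 * (S2 * EV2\<^sup>T))"
    unfolding EV2_def U2s V2s by (simp add: massoc mtrans dims)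
  have t2: "E * V2 * S2 * U2\<^sup>T = EV * (sel2 * (S2 * U2\<^sup>T))"
    unfolding EV2_def[symmetric] EV2s U2s by (simp add: massoc mtrans dims)
  have t3: "E * V2 * V2\<^sup>T * E\<^sup>T = EV * (sel2 * EV2\<^sup>T)"
    unfolding EV2_def V2s EV_def by (simp add: massoc mtrans dims)
  have ZZ1: "Z ^\<^sub>m i * Z1 Us Vs sig r rb E = (Z ^\<^sub>m i * Us) * (sel2 * (S2 * EV2\<^sup>T))
      + (Z ^\<^sub>m i * EV) * (sel2 * (S2 * U2\<^sup>T)) + (Z ^\<^sub>m i * EV) * (sel2 * EV2\<^sup>T)"
    unfolding Z1eq t1 t2 t3 by (simp add: mdistL massoc dims)
  have bZ1: "rowb (Z ^\<^sub>m i * Z1 Us Vs sig r rb E)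
     (2 * \<alpha> * \<rho> ^ i * (1 * (sg * e0)) + 2 * \<eta> * \<rho> ^ i * (1 * (sg * 1)) + 2 * \<eta> * \<rho> ^ i * (1 * e0))"
    unfolding ZZ1
  proof (rule rowb_add')
    show "rowb ((Z ^\<^sub>m i * Us) * (sel2 * (S2 * EV2\<^sup>T)) + (Z ^\<^sub>m i * EV) * (sel2 * (S2 * U2\<^sup>T)))
        (2 * \<alpha> * \<rho> ^ i * (1 * (sg * e0)) + 2 * \<eta> * \<rho> ^ i * (1 * (sg * 1)))"
    proof (rule rowb_add')
      show "rowb ((Z ^\<^sub>m i * Us) * (sel2 * (S2 * EV2\<^sup>T))) (2 * \<alpha> * \<rho> ^ i * (1 * (sg * e0)))"
        using sg0 e00 by (intro rowb_mult'[OF ZU] opb_mult'[OF opsel2] opb_mult'[OF opS2 opEV2t]) (simp_all add: dims)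
      show "rowb ((Z ^\<^sub>m i * EV) * (sel2 * (S2 * U2\<^sup>T))) (2 * \<eta> * \<rho> ^ i * (1 * (sg * 1)))"
        using sg0 by (intro rowb_mult'[OF ZE] opb_mult'[OF opsel2] opb_mult'[OF opS2 opU2t]) (simp_all add: dims)
    qed (simp_all add: dims)
    show "rowb ((Z ^\<^sub>m i * EV) * (sel2 * EV2\<^sup>T)) (2 * \<eta> * \<rho> ^ i * (1 * e0))"
      using e00 by (intro rowb_mult'[OF ZE] opb_mult'[OF opsel2 opEV2t]) (simp_all add: dims)
  qed (simp_all add: dims)
  have etaww: "\<eta> = \<alpha> * ww" unfolding eta_alpha ww_def ..
  have e0ww: "e0 = sqrt C5 * ww" unfolding e0_def ww_def by (simp add: mult_ac)
  have X0: "0 \<le> \<eta> * \<rho> ^ i" using et0 rho0 by simp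
  have sC5sg: "sqrt C5 * sg \<le> C5 * sg" using sqC5 sg0 by (rule mult_right_mono)
  have sC5ww: "sqrt C5 * ww \<le> C5 * ww" using sqC5 ww0 by (rule mult_right_mono)
  have C5sg: "sg \<le> C5 * sg" using C5 sg0 by (simp add: mult_le_cancel_right1)
  have C5ww: "ww \<le> C5 * ww" using C5 ww0 by (simp add: mult_le_cancel_right1)
  have concl4: "norm_2inf ((Z3 Vs E) ^\<^sub>m i * Z1 Us Vs sig r rb E)
           \<le> C2 * sqrt (\<mu> * r) * (sig (rb + 1) + sqrt (real m1) * \<omega> * L) * \<rho> ^ i * \<omega> * L"
  proof -
    define B1 where "B1 = 2 * \<alpha> * \<rho> ^ i * (1 * (sg * e0)) + 2 * \<eta> * \<rho> ^ i * (1 * (sg * 1)) + 2 * \<eta> * \<rho> ^ i * (1 * e0)"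
    have B1eq: "B1 = (\<eta> * \<rho> ^ i) * (2 * (sqrt C5 * sg) + 2 * sg + 2 * (sqrt C5 * ww))"
      unfolding B1_def etaww e0ww by (simp add: algebra_simps)
    have "2 * (sqrt C5 * sg) + 2 * sg + 2 * (sqrt C5 * ww) \<le> 20 * C5 * (sg + ww)"
      using sC5sg sC5ww C5sg C5ww sg0 ww0 C5 by (simp add: algebra_simps)
    then have "B1 \<le> (\<eta> * \<rho> ^ i) * (20 * C5 * (sg + ww))" unfolding B1eq using X0 by (rule mult_left_mono)
    also have "\<dots> = C2 * sqrt (\<mu> * r) * (sig (rb + 1) + sqrt (real m1) * \<omega> * L) * \<rho> ^ i * \<omega> * L"
      unfolding C2 \<eta>_def sg_def ww_def by (simp add: mult_ac)
    finally have le: "B1 \<le> C2 * sqrt (\<mu> * r) * (sig (rb + 1) + sqrt (real m1) * \<omega> * L) * \<rho> ^ i * \<omega> * L" .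
    have "0 \<le> B1" unfolding B1eq using X0 sg0 ww0 C5 sqC5_0 by simp
    then have "norm_2inf (Z ^\<^sub>m i * Z1 Us Vs sig r rb E) \<le> B1" using bZ1 unfolding B1_def by (rule n2i_le)
    then show ?thesis using le unfolding Z_def by linarith
  qed
  define Pp where "Pp = proj_perp Ut"
  have Ppeq: "Pp = 1\<^sub>m m1 - Ut * Ut\<^sup>T" unfolding Pp_def proj_perp_def using Utc by simp
  have Ppc: "Pp \<in> carrier_mat m1 m1" unfolding Ppeq using Utc by (simp add: minus_carrier_mat)
  have opUtt: "opb Ut\<^sup>T 1" using opUt by (rule opb_transpose') simp
  have opPp: "opb Pp (1 + 1 * 1)" unfolding Ppeq
    by (rule opb_minus[of _ m1 m1]) (use Utc opb_one opb_mult'[OF opUt opUtt] in \<open>simp_all add: dims\<close>)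
  have opG2: "opb (U2\<^sup>T * Ut) g" unfolding U2tUt by (rule opG)
  have opG2t: "opb (Ut\<^sup>T * U2) g"
  proof -
    have "Ut\<^sup>T * U2 = (U2\<^sup>T * Ut)\<^sup>T" by (simp add: mtrans dims)
    then show ?thesis using opb_transpose'[OF opG2 g0] by simp
  qed
  have Z2eq: "Z2 Us sig r rb Ut = Ut * Ut\<^sup>T * U2 * (S2 * S2) * U2\<^sup>T * Pp + U2 * (S2 * S2) * U2\<^sup>T * (Ut * Ut\<^sup>T)"
    unfolding Z2_def Let_def U2_def S2_def Pp_def proj_def ..
  have ZZ2: "Z ^\<^sub>m i * Z2 Us sig r rb Ut = (Z ^\<^sub>m i * Ut) * ((Ut\<^sup>T * U2) * (S2 * (S2 * (U2\<^sup>T * Pp))))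
      + (Z ^\<^sub>m i * Us) * (sel2 * (S2 * (S2 * ((U2\<^sup>T * Ut) * Ut\<^sup>T))))"
    unfolding Z2eq U2s using Ppc by (simp add: mdistL massoc mtrans dims carrier_matD[OF Ppc])
  have bZ2: "rowb (Z ^\<^sub>m i * Z2 Us sig r rb Ut)
     (4 * \<alpha> * \<rho> ^ i * (g * (sg * (sg * (1 * (1 + 1 * 1))))) + 2 * \<alpha> * \<rho> ^ i * (1 * (sg * (sg * (g * 1)))))"
    unfolding ZZ2
  proof (rule rowb_add')
    show "rowb ((Z ^\<^sub>m i * Ut) * ((Ut\<^sup>T * U2) * (S2 * (S2 * (U2\<^sup>T * Pp)))))
        (4 * \<alpha> * \<rho> ^ i * (g * (sg * (sg * (1 * (1 + 1 * 1))))))"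
      using sg0 g0 by (intro rowb_mult'[OF ZUt] opb_mult'[OF opG2t] opb_mult'[OF opS2] opb_mult'[OF opS2]
          opb_mult'[OF opU2t opPp]) (simp_all add: dims carrier_matD[OF Ppc])
    show "rowb ((Z ^\<^sub>m i * Us) * (sel2 * (S2 * (S2 * ((U2\<^sup>T * Ut) * Ut\<^sup>T))))) (2 * \<alpha> * \<rho> ^ i * (1 * (sg * (sg * (g * 1)))))"
      using sg0 g0 by (intro rowb_mult'[OF ZU] opb_mult'[OF opsel2] opb_mult'[OF opS2] opb_mult'[OF opS2]
          opb_mult'[OF opG2 opUtt]) (simp_all add: dims)
  qed (simp_all add: dims carrier_matD[OF Ppc])
  have concl5: "norm_2inf ((Z3 Vs E) ^\<^sub>m i * Z2 Us sig r rb Ut)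
           \<le> C2 * sqrt (\<mu> * r) * \<rho> ^ i * \<omega> * sig (rb + 1) * L"
  proof -
    define B2 where "B2 = 4 * \<alpha> * \<rho> ^ i * (g * (sg * (sg * (1 * (1 + 1 * 1))))) + 2 * \<alpha> * \<rho> ^ i * (1 * (sg * (sg * (g * 1))))"
    have B2eq: "B2 = (10 * (\<alpha> * \<rho> ^ i) * sg) * (sg * g)" unfolding B2_def by (simp add: algebra_simps)
    have Y0: "0 \<le> 10 * (\<alpha> * \<rho> ^ i) * sg" using al0 rho0 sg0 by simp
    have "B2 \<le> (10 * (\<alpha> * \<rho> ^ i) * sg) * (2 * e0)" unfolding B2eq using sgI[folded sg_def] Y0 by (rule mult_left_mono)
    also have "\<dots> = 20 * sqrt C5 * (\<eta> * \<rho> ^ i * sg)" unfolding e0ww etaww by (simp add: algebra_simps)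
    also have "\<dots> \<le> 20 * C5 * (\<eta> * \<rho> ^ i * sg)" using sqC5 X0 sg0 by (intro mult_right_mono mult_left_mono) auto
    also have "\<dots> = C2 * sqrt (\<mu> * r) * \<rho> ^ i * \<omega> * sig (rb + 1) * L"
      unfolding C2 \<eta>_def sg_def by (simp add: mult_ac)
    finally have le: "B2 \<le> C2 * sqrt (\<mu> * r) * \<rho> ^ i * \<omega> * sig (rb + 1) * L" .
    have "0 \<le> B2" unfolding B2eq using Y0 sg0 g0 by simp
    then have "norm_2inf (Z ^\<^sub>m i * Z2 Us sig r rb Ut) \<le> B2" using bZ2 unfolding B2_def by (rule n2i_le)
    then show ?thesis using le unfolding Z_def by linarith
  qed
  show ?thesis using concl1 concl2 concl3 concl4 concl5 by blast
qed

lemma rbar_le: "rbar C0 r m1 m2 \<omega> sig \<le> r"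
proof (cases "Aset C0 r m1 m2 \<omega> sig = {}")
  case True then show ?thesis unfolding rbar_def by simp
next
  case False
  have fin: "finite (Aset C0 r m1 m2 \<omega> sig)" unfolding Aset_def by simp
  have "\<forall>j\<in>Aset C0 r m1 m2 \<omega> sig. j \<le> r" unfolding Aset_def by auto
  then show ?thesis unfolding rbar_def using False fin by simp
qed

lemma helpL: "1 \<le> r \<Longrightarrow> r \<le> m1 \<Longrightarrow> 0 \<le> ln (real (max m1 m2))"
  by (rule ln_ge_zero) simp

lemma helpinc: "1 \<le> r \<Longrightarrow> r \<le> m1 \<Longrightarrow> 0 \<le> incoh m1 m2 r U V"
  by (rule incoh_nonneg) simp

lemma body_lemma:
  fixes C5 C3 C2 :: real
  assumes C5: "1 \<le> C5" and C3: "C3 = 10 * C5" and C2: "C2 = 20 * C3 * C5"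
  shows "\<forall>(M :: 'a measure) (E :: 'a \<Rightarrow> real mat) m1 m2 r (Us :: real mat) (Vs :: real mat)
     (Xs :: real mat) (sig :: nat \<Rightarrow> real) (\<omega> :: real) B.
   let m = max m1 m2; \<mu> = incoh m1 m2 r Us Vs; L = ln (real m);
       rb = rbar C0 r m1 m2 \<omega> sig;
       U1 = col_block Us 0 rb; V1 = col_block Vs 0 rb; S1 = sig_block sig 0 rb;
       \<rho> = C3 * (sqrt (real m1 * real m2) + real m1) * \<omega>\<^sup>2 * L\<^sup>2 in
   prob_space M \<and>
   1 \<le> r \<and> r \<le> m1 \<and> r \<le> m2 \<and>
   Us \<in> carrier_mat m1 r \<and> Vs \<in> carrier_mat m2 r \<and>
   orthonormal_cols Us \<and> orthonormal_cols Vs \<and>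
   (\<forall>i j. 1 \<le> i \<and> i \<le> j \<and> j \<le> r \<longrightarrow> sig j \<le> sig i) \<and> 0 \<le> sig r \<and> sig (r + 1) = 0 \<and>
   Xs = Us * sig_block sig 0 r * Vs\<^sup>T \<and>
   (\<forall>x \<in> space M. E x \<in> carrier_mat m1 m2) \<and>
   (\<forall>i<m1. \<forall>j<m2. (\<lambda>x. E x $$ (i,j)) \<in> borel_measurable M) \<and>
   prob_space.indep_vars M (\<lambda>_. borel) (\<lambda>(i,j) x. E x $$ (i,j)) ({..<m1} \<times> {..<m2}) \<and>
   (\<forall>i<m1. \<forall>j<m2. integrable M (\<lambda>x. (E x $$ (i,j))\<^sup>2) \<and>
                     integral\<^sup>L M (\<lambda>x. E x $$ (i,j)) = 0) \<and>
   0 \<le> \<omega> \<and> \<omega>\<^sup>2 = Max {integral\<^sup>L M (\<lambda>x. (E x $$ (i,j))\<^sup>2) | i j. i < m1 \<and> j < m2} \<and>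
   (\<forall>i<m1. \<forall>j<m2. measure M {x \<in> space M. \<bar>E x $$ (i,j)\<bar> > B} \<le> real m powr (-12)) \<and>
   B \<le> Cb * \<omega> * min ((real m1 * real m2) powr (1/4)) (sqrt (real m2)) / L
   \<longrightarrow>
   (\<forall>x \<in> space M. \<forall>Ut St Wt.
      is_svd (U1 * S1 + E x * V1) Ut St Wt \<and>
      \<comment> \<open>(i)\<close>
      (\<forall>k::nat. real k \<le> L \<longrightarrow>
         norm_2inf ((offdiag (E x * (E x)\<^sup>T)) ^\<^sub>m k * (E x * Vs))
           \<le> C3 * sqrt (\<mu> * r) * \<rho> ^ k * \<omega> * L \<and>
         norm_2inf ((offdiag (E x * (E x)\<^sup>T)) ^\<^sub>m k * Us)
           \<le> C3 * sqrt (\<mu> * r / m1) * \<rho> ^ k) \<and>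
      \<comment> \<open>(ii)\<close>
      (\<forall>i \<in> {1..rb}. \<bar>St $$ (i - 1, i - 1) - sig i\<bar> \<le> spec_norm (E x * V1)) \<and>
      spec_norm (E x * V1) \<le> spec_norm (E x * Vs) \<and>
      spec_norm (E x * Vs) \<le> sqrt C5 * sqrt (real m1) * \<omega> * L \<and>
      \<comment> \<open>(iii)\<close>
      spec_norm (Z3 Vs (E x)) \<le> 3 * C5 * (sqrt (real m1 * real m2) + real m1) * \<omega>\<^sup>2 * L\<^sup>2 \<and>
      \<comment> \<open>(iv)\<close>
      norm_2inf (U1 * U1\<^sup>T * Ut - Ut) \<le> 4 * C5 * sqrt (\<mu> * r) * \<omega> * L / sig r \<and>
      4 * C5 * sqrt (\<mu> * r) * \<omega> * L / sig r \<le> sqrt (\<mu> * r / m1) \<and>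
      \<comment> \<open>(v)\<close>
      norm_2inf Ut \<le> 2 * sqrt (\<mu> * r / m1)
      \<longrightarrow>
      (\<forall>i::nat. real i \<le> L \<longrightarrow>
         norm_2inf ((Z3 Vs (E x)) ^\<^sub>m i * Us) \<le> 3 * C3 * sqrt (\<mu> * r / m1) * \<rho> ^ i \<and>
         norm_2inf ((Z3 Vs (E x)) ^\<^sub>m i * (E x * Vs)) \<le> 3 * C3 * sqrt (\<mu> * r) * \<rho> ^ i * \<omega> * L \<and>
         norm_2inf ((Z3 Vs (E x)) ^\<^sub>m i * Ut) \<le> 4 * C3 * sqrt (\<mu> * r / m1) * \<rho> ^ i \<and>
         norm_2inf ((Z3 Vs (E x)) ^\<^sub>m i * Z1 Us Vs sig r rb (E x))
           \<le> C2 * sqrt (\<mu> * r) * (sig (rb + 1) + sqrt (real m1) * \<omega> * L) * \<rho> ^ i * \<omega> * L \<and>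
         norm_2inf ((Z3 Vs (E x)) ^\<^sub>m i * Z2 Us sig r rb Ut)
           \<le> C2 * sqrt (\<mu> * r) * \<rho> ^ i * \<omega> * sig (rb + 1) * L))"
  apply (unfold Let_def)
  apply (intro allI impI ballI)
  apply (elim conjE)
  apply (rule det_main)
                      apply (assumption | rule rbar_le C5 C3 C2 refl | rule helpL helpinc | blast)+
  done

lemma inner:
  fixes C5 :: real
  assumes C5: "1 \<le> C5"
  shows "\<exists>C2 > (0::real). \<exists>C3 > (0::real). \<exists>K0. \<forall>C0 \<ge> K0.
   \<forall>(M :: 'a measure) (E :: 'a \<Rightarrow> real mat) m1 m2 r (Us :: real mat) (Vs :: real mat)
     (Xs :: real mat) (sig :: nat \<Rightarrow> real) (\<omega> :: real) B.
   let m = max m1 m2; \<mu> = incoh m1 m2 r Us Vs; L = ln (real m);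
       rb = rbar C0 r m1 m2 \<omega> sig;
       U1 = col_block Us 0 rb; V1 = col_block Vs 0 rb; S1 = sig_block sig 0 rb;
       \<rho> = C3 * (sqrt (real m1 * real m2) + real m1) * \<omega>\<^sup>2 * L\<^sup>2 in
   prob_space M \<and>
   1 \<le> r \<and> r \<le> m1 \<and> r \<le> m2 \<and>
   Us \<in> carrier_mat m1 r \<and> Vs \<in> carrier_mat m2 r \<and>
   orthonormal_cols Us \<and> orthonormal_cols Vs \<and>
   (\<forall>i j. 1 \<le> i \<and> i \<le> j \<and> j \<le> r \<longrightarrow> sig j \<le> sig i) \<and> 0 \<le> sig r \<and> sig (r + 1) = 0 \<and>
   Xs = Us * sig_block sig 0 r * Vs\<^sup>T \<and>
   (\<forall>x \<in> space M. E x \<in> carrier_mat m1 m2) \<and>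
   (\<forall>i<m1. \<forall>j<m2. (\<lambda>x. E x $$ (i,j)) \<in> borel_measurable M) \<and>
   prob_space.indep_vars M (\<lambda>_. borel) (\<lambda>(i,j) x. E x $$ (i,j)) ({..<m1} \<times> {..<m2}) \<and>
   (\<forall>i<m1. \<forall>j<m2. integrable M (\<lambda>x. (E x $$ (i,j))\<^sup>2) \<and>
                     integral\<^sup>L M (\<lambda>x. E x $$ (i,j)) = 0) \<and>
   0 \<le> \<omega> \<and> \<omega>\<^sup>2 = Max {integral\<^sup>L M (\<lambda>x. (E x $$ (i,j))\<^sup>2) | i j. i < m1 \<and> j < m2} \<and>
   (\<forall>i<m1. \<forall>j<m2. measure M {x \<in> space M. \<bar>E x $$ (i,j)\<bar> > B} \<le> real m powr (-12)) \<and>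
   B \<le> Cb * \<omega> * min ((real m1 * real m2) powr (1/4)) (sqrt (real m2)) / L
   \<longrightarrow>
   (\<forall>x \<in> space M. \<forall>Ut St Wt.
      is_svd (U1 * S1 + E x * V1) Ut St Wt \<and>
      \<comment> \<open>(i)\<close>
      (\<forall>k::nat. real k \<le> L \<longrightarrow>
         norm_2inf ((offdiag (E x * (E x)\<^sup>T)) ^\<^sub>m k * (E x * Vs))
           \<le> C3 * sqrt (\<mu> * r) * \<rho> ^ k * \<omega> * L \<and>
         norm_2inf ((offdiag (E x * (E x)\<^sup>T)) ^\<^sub>m k * Us)
           \<le> C3 * sqrt (\<mu> * r / m1) * \<rho> ^ k) \<and>
      \<comment> \<open>(ii)\<close>
      (\<forall>i \<in> {1..rb}. \<bar>St $$ (i - 1, i - 1) - sig i\<bar> \<le> spec_norm (E x * V1)) \<and>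
      spec_norm (E x * V1) \<le> spec_norm (E x * Vs) \<and>
      spec_norm (E x * Vs) \<le> sqrt C5 * sqrt (real m1) * \<omega> * L \<and>
      \<comment> \<open>(iii)\<close>
      spec_norm (Z3 Vs (E x)) \<le> 3 * C5 * (sqrt (real m1 * real m2) + real m1) * \<omega>\<^sup>2 * L\<^sup>2 \<and>
      \<comment> \<open>(iv)\<close>
      norm_2inf (U1 * U1\<^sup>T * Ut - Ut) \<le> 4 * C5 * sqrt (\<mu> * r) * \<omega> * L / sig r \<and>
      4 * C5 * sqrt (\<mu> * r) * \<omega> * L / sig r \<le> sqrt (\<mu> * r / m1) \<and>
      \<comment> \<open>(v)\<close>
      norm_2inf Ut \<le> 2 * sqrt (\<mu> * r / m1)
      \<longrightarrow>
      (\<forall>i::nat. real i \<le> L \<longrightarrow>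
         norm_2inf ((Z3 Vs (E x)) ^\<^sub>m i * Us) \<le> 3 * C3 * sqrt (\<mu> * r / m1) * \<rho> ^ i \<and>
         norm_2inf ((Z3 Vs (E x)) ^\<^sub>m i * (E x * Vs)) \<le> 3 * C3 * sqrt (\<mu> * r) * \<rho> ^ i * \<omega> * L \<and>
         norm_2inf ((Z3 Vs (E x)) ^\<^sub>m i * Ut) \<le> 4 * C3 * sqrt (\<mu> * r / m1) * \<rho> ^ i \<and>
         norm_2inf ((Z3 Vs (E x)) ^\<^sub>m i * Z1 Us Vs sig r rb (E x))
           \<le> C2 * sqrt (\<mu> * r) * (sig (rb + 1) + sqrt (real m1) * \<omega> * L) * \<rho> ^ i * \<omega> * L \<and>
         norm_2inf ((Z3 Vs (E x)) ^\<^sub>m i * Z2 Us sig r rb Ut)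
           \<le> C2 * sqrt (\<mu> * r) * \<rho> ^ i * \<omega> * sig (rb + 1) * L))"
  apply (rule exI[of _ "20 * (10 * C5) * C5"])
  apply (rule conjI)
  using C5 apply simp
  apply (rule exI[of _ "10 * C5"])
  apply (rule conjI)
  using C5 apply simp
  apply (rule exI[of _ "0::real"])
  apply (rule allI)
  apply (rule impI)
  apply (rule body_lemma[OF C5 refl refl])
  done

theorem lemma5:
  "\<forall>Cb > (0::real). \<exists>K5. \<forall>C5 \<ge> K5. \<exists>C2 > (0::real). \<exists>C3 > (0::real). \<exists>K0. \<forall>C0 \<ge> K0.
   \<forall>(M :: 'a measure) (E :: 'a \<Rightarrow> real mat) m1 m2 r (Us :: real mat) (Vs :: real mat)
     (Xs :: real mat) (sig :: nat \<Rightarrow> real) (\<omega> :: real) B.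
   let m = max m1 m2; \<mu> = incoh m1 m2 r Us Vs; L = ln (real m);
       rb = rbar C0 r m1 m2 \<omega> sig;
       U1 = col_block Us 0 rb; V1 = col_block Vs 0 rb; S1 = sig_block sig 0 rb;
       \<rho> = C3 * (sqrt (real m1 * real m2) + real m1) * \<omega>\<^sup>2 * L\<^sup>2 in
   prob_space M \<and>
   1 \<le> r \<and> r \<le> m1 \<and> r \<le> m2 \<and>
   Us \<in> carrier_mat m1 r \<and> Vs \<in> carrier_mat m2 r \<and>
   orthonormal_cols Us \<and> orthonormal_cols Vs \<and>
   (\<forall>i j. 1 \<le> i \<and> i \<le> j \<and> j \<le> r \<longrightarrow> sig j \<le> sig i) \<and> 0 \<le> sig r \<and> sig (r + 1) = 0 \<and>
   Xs = Us * sig_block sig 0 r * Vs\<^sup>T \<and>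
   (\<forall>x \<in> space M. E x \<in> carrier_mat m1 m2) \<and>
   (\<forall>i<m1. \<forall>j<m2. (\<lambda>x. E x $$ (i,j)) \<in> borel_measurable M) \<and>
   prob_space.indep_vars M (\<lambda>_. borel) (\<lambda>(i,j) x. E x $$ (i,j)) ({..<m1} \<times> {..<m2}) \<and>
   (\<forall>i<m1. \<forall>j<m2. integrable M (\<lambda>x. (E x $$ (i,j))\<^sup>2) \<and>
                     integral\<^sup>L M (\<lambda>x. E x $$ (i,j)) = 0) \<and>
   0 \<le> \<omega> \<and> \<omega>\<^sup>2 = Max {integral\<^sup>L M (\<lambda>x. (E x $$ (i,j))\<^sup>2) | i j. i < m1 \<and> j < m2} \<and>
   (\<forall>i<m1. \<forall>j<m2. measure M {x \<in> space M. \<bar>E x $$ (i,j)\<bar> > B} \<le> real m powr (-12)) \<and>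
   B \<le> Cb * \<omega> * min ((real m1 * real m2) powr (1/4)) (sqrt (real m2)) / L
   \<longrightarrow>
   (\<forall>x \<in> space M. \<forall>Ut St Wt.
      is_svd (U1 * S1 + E x * V1) Ut St Wt \<and>
      \<comment> \<open>(i)\<close>
      (\<forall>k::nat. real k \<le> L \<longrightarrow>
         norm_2inf ((offdiag (E x * (E x)\<^sup>T)) ^\<^sub>m k * (E x * Vs))
           \<le> C3 * sqrt (\<mu> * r) * \<rho> ^ k * \<omega> * L \<and>
         norm_2inf ((offdiag (E x * (E x)\<^sup>T)) ^\<^sub>m k * Us)
           \<le> C3 * sqrt (\<mu> * r / m1) * \<rho> ^ k) \<and>
      \<comment> \<open>(ii)\<close>
      (\<forall>i \<in> {1..rb}. \<bar>St $$ (i - 1, i - 1) - sig i\<bar> \<le> spec_norm (E x * V1)) \<and>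
      spec_norm (E x * V1) \<le> spec_norm (E x * Vs) \<and>
      spec_norm (E x * Vs) \<le> sqrt C5 * sqrt (real m1) * \<omega> * L \<and>
      \<comment> \<open>(iii)\<close>
      spec_norm (Z3 Vs (E x)) \<le> 3 * C5 * (sqrt (real m1 * real m2) + real m1) * \<omega>\<^sup>2 * L\<^sup>2 \<and>
      \<comment> \<open>(iv)\<close>
      norm_2inf (U1 * U1\<^sup>T * Ut - Ut) \<le> 4 * C5 * sqrt (\<mu> * r) * \<omega> * L / sig r \<and>
      4 * C5 * sqrt (\<mu> * r) * \<omega> * L / sig r \<le> sqrt (\<mu> * r / m1) \<and>
      \<comment> \<open>(v)\<close>
      norm_2inf Ut \<le> 2 * sqrt (\<mu> * r / m1)
      \<longrightarrow>
      (\<forall>i::nat. real i \<le> L \<longrightarrow>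
         norm_2inf ((Z3 Vs (E x)) ^\<^sub>m i * Us) \<le> 3 * C3 * sqrt (\<mu> * r / m1) * \<rho> ^ i \<and>
         norm_2inf ((Z3 Vs (E x)) ^\<^sub>m i * (E x * Vs)) \<le> 3 * C3 * sqrt (\<mu> * r) * \<rho> ^ i * \<omega> * L \<and>
         norm_2inf ((Z3 Vs (E x)) ^\<^sub>m i * Ut) \<le> 4 * C3 * sqrt (\<mu> * r / m1) * \<rho> ^ i \<and>
         norm_2inf ((Z3 Vs (E x)) ^\<^sub>m i * Z1 Us Vs sig r rb (E x))
           \<le> C2 * sqrt (\<mu> * r) * (sig (rb + 1) + sqrt (real m1) * \<omega> * L) * \<rho> ^ i * \<omega> * L \<and>
         norm_2inf ((Z3 Vs (E x)) ^\<^sub>m i * Z2 Us sig r rb Ut)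
           \<le> C2 * sqrt (\<mu> * r) * \<rho> ^ i * \<omega> * sig (rb + 1) * L))"
  apply (intro allI impI)
  apply (rule exI[of _ "1::real"])
  apply (intro allI impI)
  apply (erule inner)
  done

end
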